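(* Let $f(z)=z+\sum_{n=2}^{\infty}a_nz^n\in\mathcal{S}^{*}_{\rho}$. Then $$|H_{4,1}(f)|\le 0.428001,\qquad\text{where}\quad H_{4,1}(f)=\det\begin{pmatrix}1&a_2&a_3&a_4\\ a_2&a_3&a_4&a_5\\ a_3&a_4&a_5&a_6\\ a_4&a_5&a_6&a_7\end{pmatrix}.$$
   Context: Let $\mathbb{D}=\{z\in\mathbb{C}:|z|<1\}$. For analytic $g_1,g_2$ on $\mathbb{D}$, $g_1\prec g_2$ means there is an analytic $w:\mathbb{D}\to\mathbb{D}$ with $w(0)=0$ such that $g_1=g_2\circ w$. Here $\sinh^{-1}$ denotes the principal branch of the inverse hyperbolic sine with $\sinh^{-1}(0)=0$, analytic on $\mathbb{D}$. The class $\mathcal{S}^{*}_{\rho}$ consists of all univalent analytic functions $f$ on $\mathbb{D}$ with $f(z)=z+\sum_{n\ge2}a_nz^n$ such that $\frac{zf'(z)}{f(z)}\prec 1+\sinh^{-1}(z)$. *)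

theory Defs
  imports "HOL-Complex_Analysis.Complex_Analysis"
begin

definition subordinate :: "(complex \<Rightarrow> complex) \<Rightarrow> (complex \<Rightarrow> complex) \<Rightarrow> bool" where
  "subordinate g1 g2 \<longleftrightarrow> (\<exists>w. w holomorphic_on ball 0 1 \<and> w ` ball 0 1 \<subseteq> ball 0 1 \<and>
      w 0 = 0 \<and> (\<forall>z\<in>ball 0 1. g1 z = g2 (w z)))"

definition taylor_coeff :: "(complex \<Rightarrow> complex) \<Rightarrow> nat \<Rightarrow> complex" where
  "taylor_coeff f n = (deriv ^^ n) f 0 / fact n"

text \<open>The class S*_rho: normalized univalent analytic functions on the disc with
  z f'(z)/f(z) (extended by its limit 1 at z = 0) subordinate to 1 + arsinh z (principal branch, library arsinh).\<close>
definition S_star_rho :: "(complex \<Rightarrow> complex) set" where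
  "S_star_rho = {f. f holomorphic_on ball 0 1 \<and> inj_on f (ball 0 1) \<and> f 0 = 0 \<and> deriv f 0 = 1 \<and>
      subordinate (\<lambda>z. if z = 0 then 1 else z * deriv f z / f z) (\<lambda>z. 1 + arsinh z)}"

definition hankel41 :: "(complex \<Rightarrow> complex) \<Rightarrow> complex" where
  "hankel41 f = (let a = (\<lambda>n. if n = 1 then 1 else taylor_coeff f n);
                     M = (\<lambda>i j. a (i + j + 1)) in
     (\<Sum>p | p permutes {0..<4::nat}. of_int (sign p) * (\<Prod>i<4. M i (p i))))"

end

theory Submission
  imports Defs
begin

lemma arsinh_csqrt: "arsinh (u::complex) = Ln (u + csqrt (u^2 + 1))"
  by (simp add: arsinh_def csqrt_conv_powr)

lemma arsinh_nz: "u + csqrt (u^2 + 1) \<noteq> (0::complex)"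
proof
  assume "u + csqrt (u^2 + 1) = 0"
  hence "csqrt (u^2+1) = -u" by (simp add: add_eq_0_iff)
  hence "(csqrt (u^2+1))^2 = u^2" by simp
  thus False by simp
qed

lemma exp_arsinh: "exp (arsinh (u::complex)) = u + csqrt (u^2 + 1)"
  using arsinh_nz[of u] by (simp add: arsinh_csqrt)

lemma arsinh_rel: "exp (arsinh u) * exp (arsinh u) = 2 * (u * exp (arsinh (u::complex))) + 1"
proof -
  have "(csqrt (u^2+1))^2 = u^2 + 1" by simp
  thus ?thesis unfolding exp_arsinh by algebra
qed

lemma arsinh_holo: "arsinh holomorphic_on ball (0::complex) 1"
proof -
  have A: "u^2 + 1 \<notin> \<real>\<^sub>\<le>\<^sub>0" if "u \<in> ball 0 1" for u :: complex
  proof -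
    have "\<bar>Re (u^2)\<bar> \<le> cmod (u^2)" by (rule abs_Re_le_cmod)
    also have "\<dots> < 1" using that by (simp add: norm_power power_less_one_iff) 
    finally have "Re (u^2 + 1) > 0" by simp
    thus ?thesis by (auto simp: complex_nonpos_Reals_iff)
  qed
  have B: "u + csqrt (u^2 + 1) \<notin> \<real>\<^sub>\<le>\<^sub>0" if "u \<in> ball 0 1" for u :: complex
  proof
    assume v: "u + csqrt (u^2 + 1) \<in> \<real>\<^sub>\<le>\<^sub>0"
    define s where "s = csqrt (u^2+1)"
    define v where "v = u + s"
    have vnz: "v \<noteq> 0" unfolding v_def s_def by (rule arsinh_nz)
    have vr: "Im v = 0" "Re v < 0" using v vnz unfolding v_def s_def
      by (auto simp: complex_nonpos_Reals_iff complex_eq_iff)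
    have "s^2 = u^2 + 1" unfolding s_def by simp
    hence "(s - u) * v = 1" unfolding v_def by algebra
    hence su: "s - u = 1 / v" using vnz by (simp add: field_simps)
    have "s = (v + 1/v) / 2" using su unfolding v_def by (simp add: field_simps)
    moreover have "v = of_real (Re v)" using vr by (simp add: complex_eq_iff)
    ultimately have "s = of_real ((Re v + 1 / Re v) / 2)" by (metis of_real_add of_real_divide of_real_1 of_real_numeral)
    hence "Re s = (Re v + 1 / Re v) / 2" by (metis Re_complex_of_real)
    moreover have "Re v + 1 / Re v < 0" using vr by (intro add_neg_neg) auto
    ultimately have "Re s < 0" by simp
    moreover have "Re s \<ge> 0" unfolding s_def using csqrt_principal[of "u^2+1"] by auto
    ultimately show False by simp
  qed
  have "(\<lambda>u. Ln (u + csqrt (u^2 + 1))) holomorphic_on ball 0 1"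
    using A B by (intro holomorphic_on_Ln' holomorphic_intros) auto
  thus ?thesis unfolding arsinh_csqrt[abs_def] .
qed

lemma fps_expansion_unique:
  fixes f g :: "complex \<Rightarrow> complex"
  assumes "f has_fps_expansion F" "g has_fps_expansion G" "eventually (\<lambda>z. f z = g z) (nhds 0)"
  shows "F = G"
proof (rule fps_ext)
  fix n
  have "(deriv ^^ n) f 0 = (deriv ^^ n) g 0"
    by (rule higher_deriv_cong_ev[OF assms(3) refl])
  thus "fps_nth F n = fps_nth G n"
    using fps_nth_fps_expansion[OF assms(1), of n] fps_nth_fps_expansion[OF assms(2), of n] by simp
qed


lemma coeff_le1:
  fixes w :: "complex \<Rightarrow> complex"
  assumes holw: "w holomorphic_on ball 0 1" and wb: "w ` ball 0 1 \<subseteq> ball 0 1" and n: "n > 0"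
  shows "cmod ((deriv ^^ n) w 0 / fact n) \<le> 1"
proof -
  define K where "K = cmod ((deriv ^^ n) w 0 / fact n)"
  have bd: "K * r^n \<le> 1" if r: "0 < r" "r < 1" for r :: real
  proof -
    have "cmod ((deriv ^^ n) w 0) \<le> fact n * 1 / r^n"
    proof (rule Cauchy_higher_deriv_bound[where y=0])
      show "w holomorphic_on ball 0 r" using r by (intro holomorphic_on_subset[OF holw]) auto
      show "continuous_on (cball 0 r) w"
        using r by (intro continuous_on_subset[OF holomorphic_on_imp_continuous_on[OF holw]]) auto
      show "\<And>z. z \<in> ball 0 r \<Longrightarrow> w z \<in> ball 0 1" using wb r by (auto simp: subset_iff)
    qed (use r n in auto)
    thus ?thesis using r unfolding K_def by (simp add: norm_divide field_simps)
  qed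
  have lim: "((\<lambda>r. K * r^n) \<longlongrightarrow> K * 1^n) (at_left 1)"
    by (intro tendsto_intros)
  have ev: "eventually (\<lambda>r. K * r^n \<le> 1) (at_left (1::real))"
  proof -
    have "eventually (\<lambda>r. r \<in> {0<..<1}) (at_left (1::real))" by (rule eventually_at_left_real) simp
    thus ?thesis by eventually_elim (use bd in auto)
  qed
  have "K * 1^n \<le> 1"
    by (rule tendsto_upperbound[OF lim ev]) simp
  thus ?thesis unfolding K_def by simp
qed

lemma schwarz_pick_coeff:
  fixes w :: "complex \<Rightarrow> complex"
  assumes holw: "w holomorphic_on ball 0 1" and wb: "w ` ball 0 1 \<subseteq> ball 0 1" and w0: "w 0 = 0"
  shows "cmod (fps_nth (fps_expansion w 0) 2) \<le> 1 - (cmod (fps_nth (fps_expansion w 0) 1))^2"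
proof -
  define W where "W = fps_expansion w 0"
  have no: "\<And>z. norm z < 1 \<Longrightarrow> norm (w z) < 1" using wb by (auto simp: subset_iff)
  obtain h where holh: "h holomorphic_on ball 0 1" and wh: "\<And>z. norm z < 1 \<Longrightarrow> w z = z * h z"
      and dw: "deriv w 0 = h 0"
    using Schwarz3[OF holw w0] by blast
  have Wexp: "w has_fps_expansion W" unfolding W_def
    by (rule has_fps_expansion_fps_expansion[OF _ _ holw]) auto
  define Hh where "Hh = fps_expansion h 0"
  have Hexp: "h has_fps_expansion Hh" unfolding Hh_def
    by (rule has_fps_expansion_fps_expansion[OF _ _ holh]) auto
  have ev1: "eventually (\<lambda>z. z \<in> ball (0::complex) 1) (nhds 0)"
    by (rule eventually_nhds_in_open) auto
  have "W = fps_X * Hh"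
  proof (rule fps_expansion_unique[OF Wexp])
    show "(\<lambda>z. z * h z) has_fps_expansion fps_X * Hh"
      by (intro has_fps_expansion_mult has_fps_expansion_fps_X Hexp)
    show "eventually (\<lambda>z. w z = z * h z) (nhds 0)"
      using ev1 by eventually_elim (auto intro: wh)
  qed
  hence W1: "fps_nth W 1 = h 0" and W2: "fps_nth W 2 = deriv h 0"
    using fps_nth_fps_expansion[OF Hexp, of 0] fps_nth_fps_expansion[OF Hexp, of 1]
    by (simp_all add: numeral_2_eq_2)
  have hle: "cmod (h z) \<le> 1" if "norm z < 1" for z
  proof (cases "z = 0")
    case True thus ?thesis using Schwarz_Lemma(2)[OF holw w0 no that] dw by simp
  next
    case False
    have "cmod (z * h z) \<le> cmod z" using Schwarz_Lemma(1)[OF holw w0 no that] wh[OF that] by simp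
    thus ?thesis using False by (simp add: norm_mult)
  qed
  show ?thesis
  proof (cases "\<exists>z. norm z < 1 \<and> cmod (h z) = 1")
    case True
    then obtain z where z: "norm z < 1" "cmod (h z) = 1" by blast
    have "(\<exists>z. norm z < 1 \<and> z \<noteq> 0 \<and> norm (w z) = norm z) \<or> norm (deriv w 0) = 1"
    proof (cases "z = 0")
      case True thus ?thesis using z dw by simp
    next
      case False thus ?thesis using z wh[OF z(1)] by (auto simp: norm_mult)
    qed
    then obtain \<alpha> where al: "\<And>z. norm z < 1 \<Longrightarrow> w z = \<alpha> * z" and na: "norm \<alpha> = 1"
      using Schwarz_Lemma(3)[OF holw w0 no z(1)] by blast
    have "W = fps_const \<alpha> * fps_X"
    proof (rule fps_expansion_unique[OF Wexp])
      show "(\<lambda>z. \<alpha> * z) has_fps_expansion fps_const \<alpha> * fps_X"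
        by (intro has_fps_expansion_cmult_left has_fps_expansion_fps_X)
      show "eventually (\<lambda>z. w z = \<alpha> * z) (nhds 0)"
        using ev1 by eventually_elim (auto intro: al)
    qed
    thus ?thesis using na unfolding W_def[symmetric] by (simp add: numeral_2_eq_2)
  next
    case False
    hence hlt: "cmod (h z) < 1" if "norm z < 1" for z
      using hle[OF that] that by (auto simp: order_le_less)
    define a where "a = h 0"
    have a1: "cmod a < 1" unfolding a_def using hlt[of 0] by simp
    define k where "k = (\<lambda>z. Moebius_function 0 a (h z))"
    have holk: "k holomorphic_on ball 0 1" unfolding k_def
      by (rule holomorphic_on_compose_gen[OF holh Moebius_function_holomorphic[OF a1], unfolded o_def])
         (use hlt in auto)
    have k0: "k 0 = 0" unfolding k_def a_def by (simp add: Moebius_function_eq_zero)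
    have kno: "\<And>z. norm z < 1 \<Longrightarrow> norm (k z) < 1"
      unfolding k_def using Moebius_function_norm_lt_1[OF a1] hlt by auto
    have dk: "norm (deriv k 0) \<le> 1" using Schwarz_Lemma(2)[OF holk k0 kno, of 0] by simp
    have den: "1 - cnj a * a \<noteq> 0"
    proof
      assume "1 - cnj a * a = 0"
      hence "cnj a * a = 1" by simp
      hence "cmod a ^ 2 = 1" by (metis complex_norm_square mult.commute of_real_eq_1_iff)
      moreover have "cmod a ^ 2 < 1" using a1 by (simp add: abs_square_less_1)
      ultimately show False by simp
    qed
    have hd: "(h has_field_derivative deriv h 0) (at 0)"
      using holh by (intro holomorphic_derivI[of h "ball 0 1"]) auto
    have g0: "1 - cnj a * h 0 \<noteq> 0" using den unfolding a_def by simp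
    have "((\<lambda>z. (h z - a) / (1 - cnj a * h z)) has_field_derivative
            ((deriv h 0 - 0) * (1 - cnj a * h 0) - (h 0 - a) * (0 - cnj a * deriv h 0)) / ((1 - cnj a * h 0) * (1 - cnj a * h 0))) (at 0)"
      by (rule DERIV_divide[OF DERIV_diff[OF hd DERIV_const] DERIV_diff[OF DERIV_const DERIV_cmult[OF hd]] g0])
    hence "deriv k 0 = ((deriv h 0 - 0) * (1 - cnj a * h 0) - (h 0 - a) * (0 - cnj a * deriv h 0)) / ((1 - cnj a * h 0) * (1 - cnj a * h 0))"
      unfolding k_def Moebius_function_simple by (rule DERIV_imp_deriv)
    hence "deriv k 0 = (deriv h 0 * (1 - cnj a * a)) / ((1 - cnj a * a) * (1 - cnj a * a))"
      unfolding a_def[symmetric] by simp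
    also have "\<dots> = deriv h 0 / (1 - cnj a * a)"
      using den by (rule nonzero_mult_divide_mult_cancel_right)
    finally have "deriv k 0 = deriv h 0 / (1 - cnj a * a)" .
    hence "cmod (deriv h 0) \<le> cmod (1 - cnj a * a)"
      using dk den by (simp add: norm_divide divide_le_eq)
    also have "1 - cnj a * a = of_real (1 - cmod a ^ 2)"
      using complex_norm_square[of a] by (simp add: mult.commute)
    also have "cmod (of_real (1 - cmod a ^ 2)) = 1 - cmod a ^ 2"
      unfolding norm_of_real using a1 abs_square_less_1[of "cmod a"] by simp
    finally show ?thesis using W1 W2 unfolding W_def a_def by simp
  qed
qed

lemma L_add: "cmod a \<le> A \<Longrightarrow> cmod b \<le> B \<Longrightarrow> cmod (a + b) \<le> A + B"
  by (meson add_mono norm_triangle_le)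
lemma L_mon:
  fixes k c1 c2 c3 c4 c5 c6 :: complex
  assumes "cmod c3 \<le> 1" "cmod c4 \<le> 1" "cmod c5 \<le> 1" "cmod c6 \<le> 1"
  shows "cmod (k * c1^a1 * c2^a2 * c3^a3 * c4^a4 * c5^a5 * c6^a6) \<le> cmod k * cmod c1^a1 * cmod c2^a2"
proof -
  have p: "cmod c^n \<le> 1" if "cmod c \<le> 1" for c :: complex and n
    using that by (simp add: power_le_one)
  have "cmod (k * c1^a1 * c2^a2 * c3^a3 * c4^a4 * c5^a5 * c6^a6) =
     (cmod k * cmod c1^a1 * cmod c2^a2) * (cmod c3^a3 * cmod c4^a4 * cmod c5^a5 * cmod c6^a6)"
    by (simp add: norm_mult norm_power)
  also have "\<dots> \<le> (cmod k * cmod c1^a1 * cmod c2^a2) * 1"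
    apply (rule mult_left_mono)
    using p assms by (auto intro!: mult_le_one)
  finally show ?thesis by simp
qed
lemma polybound1:
  fixes c1 c2 c3 c4 c5 c6 :: complex
  assumes "cmod c3 \<le> 1" "cmod c4 \<le> 1" "cmod c5 \<le> 1" "cmod c6 \<le> 1"
  defines "x \<equiv> cmod c1" and "y \<equiv> cmod c2"
  shows "cmod ((-1/64) * c1^0 * c2^0 * c3^0 * c4^3 * c5^0 * c6^0 + (1/30) * c1^0 * c2^0 * c3^1 * c4^1 * c5^1 * c6^0 + (-1/54) * c1^0 * c2^0 * c3^2 * c4^0 * c5^0 * c6^1 + (1/162) * c1^0 * c2^0 * c3^4 * c4^0 * c5^0 * c6^0 + (-1/50) * c1^0 * c2^1 * c3^0 * c4^0 * c5^2 * c6^0 + (1/48) * c1^0 * c2^1 * c3^0 * c4^1 * c5^0 * c6^1 + (-1/48) * c1^0 * c2^1 * c3^2 * c4^1 * c5^0 * c6^0 + (1/128) * c1^0 * c2^2 * c3^0 * c4^2 * c5^0 * c6^0 + (1/60) * c1^0 * c2^2 * c3^1 * c4^0 * c5^1 * c6^0 + (-1/96) * c1^0 * c2^3 * c3^0 * c4^0 * c5^0 * c6^1 + (11/2592) * c1^0 * c2^3 * c3^2 * c4^0 * c5^0 * c6^0 + (-11/2304) * c1^0 * c2^4 * c3^0 * c4^1 * c5^0 * c6^0 + (11/4608) * c1^0 * c2^6 * c3^0 * c4^0 * c5^0 * c6^0 + (1/48) * c1^1 * c2^0 * c3^1 * c4^2 * c5^0 * c6^0 + (-1/45) * c1^1 *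 c2^0 * c3^2 * c4^0 * c5^1 * c6^0 + (-1/40) * c1^1 * c2^1 * c3^0 * c4^1 * c5^1 * c6^0 + (1/36) * c1^1 * c2^1 * c3^1 * c4^0 * c5^0 * c6^1 + (1/36) * c1^1 * c2^1 * c3^3 * c4^0 * c5^0 * c6^0 + (-7/120) * c1^1 * c2^2 * c3^1 * c4^1 * c5^0 * c6^0 + (13/400) * c1^1 * c2^3 * c3^0 * c4^0 * c5^1 * c6^0 + (-37/8640) * c1^1 * c2^4 * c3^1 * c4^0 * c5^0 * c6^0 + (1/50) * c1^2 * c2^0 * c3^0 * c4^0 * c5^2 * c6^0 + (-1/48) * c1^2 * c2^0 * c3^0 * c4^1 * c5^0 * c6^1 + (-31/2160) * c1^2 * c2^0 * c3^2 * c4^1 * c5^0 * c6^0 + (11/384) * c1^2 * c2^1 * c3^0 * c4^2 * c5^0 * c6^0 + (1/300) * c1^2 * c2^1 * c3^1 * c4^0 * c5^1 * c6^0 + (-1/48) * c1^2 * c2^2 * c3^0 * c4^0 * c5^0 * c6^1 + (-13/720) * c1^2 * c2^2 * c3^2 * c4^0 * c5^0 * c6^0 + (107/5760) * c1^2 * c2^3 * c3^0 * c4^1 * c5^0 * c6^0 + (-971/115200) * c1^2 * c2^5 * c3^0 * c4^0 * c5^0 * c6^0 + (-1/72) * c1^3 * c2^0 * c3^0 * c4^1 * c5^1 * c6^0 + (5/324) * c1^3 * c2^0 * c3^1 * c4^0 * c5^0 * c6^1 + (49/4860) * c1^3 * c2^0 * c3^3 * c4^0 * c5^0 * c6^0 +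 (1/180) * c1^3 * c2^1 * c3^1 * c4^1 * c5^0 * c6^0 + (-13/900) * c1^3 * c2^2 * c3^0 * c4^0 * c5^1 * c6^0 + (4861/194400) * c1^3 * c2^3 * c3^1 * c4^0 * c5^0 * c6^0 + (11/1152) * c1^4 * c2^0 * c3^0 * c4^2 * c5^0 * c6^0 + (-49/2700) * c1^4 * c2^0 * c3^1 * c4^0 * c5^1 * c6^0 + (1/108) * c1^4 * c2^1 * c3^0 * c4^0 * c5^0 * c6^1 + (-767/32400) * c1^4 * c2^1 * c3^2 * c4^0 * c5^0 * c6^0 + (-1/768) * c1^4 * c2^2 * c3^0 * c4^1 * c5^0 * c6^0 + (-1973/518400) * c1^4 * c2^4 * c3^0 * c4^0 * c5^0 * c6^0 + (11/2025) * c1^5 * c2^0 * c3^1 * c4^1 * c5^0 * c6^0 + (29/4500) * c1^5 * c2^1 * c3^0 * c4^0 * c5^1 * c6^0 + (59/4800) * c1^5 * c2^2 * c3^1 * c4^0 * c5^0 * c6^0 + (-25/7776) * c1^6 * c2^0 * c3^0 * c4^0 * c5^0 * c6^1 + (413/194400) * c1^6 * c2^0 * c3^2 * c4^0 * c5^0 * c6^0 + (-217/14400) * c1^6 * c2^1 * c3^0 * c4^1 * c5^0 * c6^0 + (-230171/46656000) * c1^6 * c2^3 * c3^0 * c4^0 * c5^0 * c6^0 + (581/162000) * c1^7 * c2^0 * c3^0 * c4^0 * c5^1 * c6^0 + (2239/486000) * c1^7 * c2^1 * c3^1 * c4^0 * c5^0 * c6^0 + (71/311040) * c1^8 * c2^0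 * c3^0 * c4^1 * c5^0 * c6^0 + (1633/648000) * c1^8 * c2^2 * c3^0 * c4^0 * c5^0 * c6^0 + (-28469/17496000) * c1^9 * c2^0 * c3^1 * c4^0 * c5^0 * c6^0 + (-136729/233280000) * c1^10 * c2^1 * c3^0 * c4^0 * c5^0 * c6^0 + (337561/2099520000) * c1^12 * c2^0 * c3^0 * c4^0 * c5^0 * c6^0) \<le> cmod (-1/64::complex) * x^0 * y^0 + cmod (1/30::complex) * x^0 * y^0 + cmod (-1/54::complex) * x^0 * y^0 + cmod (1/162::complex) * x^0 * y^0 + cmod (-1/50::complex) * x^0 * y^1 + cmod (1/48::complex) * x^0 * y^1 + cmod (-1/48::complex) * x^0 * y^1 + cmod (1/128::complex) * x^0 * y^2 + cmod (1/60::complex) * x^0 * y^2 + cmod (-1/96::complex) * x^0 * y^3 + cmod (11/2592::complex) * x^0 * y^3 + cmod (-11/2304::complex) * x^0 * y^4 + cmod (11/4608::complex) * x^0 * y^6 + cmod (1/48::complex) * x^1 * y^0 + cmod (-1/45::complex) * x^1 * y^0 + cmod (-1/40::complex) * x^1 * y^1 + cmod (1/36::complex) * x^1 * y^1 + cmod (1/36::complex) * x^1 * y^1 + cmod (-7/120::complex) * x^1 * y^2 + cmod (13/400::complex) * x^1 * y^3 + cmod (-37/8640::complex) * x^1 * y^4 + cmod (1/50::complex) * x^2 * y^0 + cmod (-1/48::complex) * x^2 * y^0 + cmod (-31/2160::complex) * x^2 * y^0 + cmod (11/384::complex) * x^2 * y^1 + cmod (1/300::complex) * x^2 * y^1 +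 cmod (-1/48::complex) * x^2 * y^2 + cmod (-13/720::complex) * x^2 * y^2 + cmod (107/5760::complex) * x^2 * y^3 + cmod (-971/115200::complex) * x^2 * y^5 + cmod (-1/72::complex) * x^3 * y^0 + cmod (5/324::complex) * x^3 * y^0 + cmod (49/4860::complex) * x^3 * y^0 + cmod (1/180::complex) * x^3 * y^1 + cmod (-13/900::complex) * x^3 * y^2 + cmod (4861/194400::complex) * x^3 * y^3 + cmod (11/1152::complex) * x^4 * y^0 + cmod (-49/2700::complex) * x^4 * y^0 + cmod (1/108::complex) * x^4 * y^1 + cmod (-767/32400::complex) * x^4 * y^1 + cmod (-1/768::complex) * x^4 * y^2 + cmod (-1973/518400::complex) * x^4 * y^4 + cmod (11/2025::complex) * x^5 * y^0 + cmod (29/4500::complex) * x^5 * y^1 + cmod (59/4800::complex) * x^5 * y^2 + cmod (-25/7776::complex) * x^6 * y^0 + cmod (413/194400::complex) * x^6 * y^0 + cmod (-217/14400::complex) * x^6 * y^1 + cmod (-230171/46656000::complex) * x^6 * y^3 + cmod (581/162000::complex) * x^7 * y^0 + cmod (2239/486000::complex) * x^7 * y^1 + cmod (71/311040::complex) * x^8 * y^0 + cmod (1633/648000::complex) * x^8 * y^2 + cmod (-28469/17496000::complex) * x^9 * y^0 + cmod (-136729/233280000::complex) * x^10 * y^1 + cmod (337561/2099520000::complex) * x^12 * y^0"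
  unfolding x_def y_def
  by (intro L_add L_mon assms)
lemma T_mono: "0 \<le> x \<Longrightarrow> x \<le> u \<Longrightarrow> 0 \<le> y \<Longrightarrow> y \<le> v \<Longrightarrow> 0 \<le> (k::real) \<Longrightarrow> k * x^a * y^b \<le> k * u^a * v^b"
  by (intro mult_mono power_mono mult_left_mono) auto
lemma realbound_piece:
  fixes x y :: real
  assumes "l \<le> x" "x \<le> u" "0 \<le> l" "y \<le> 1 - l^2" "0 \<le> y"
  shows "1/64 * x^0 * y^0 + 1/30 * x^0 * y^0 + 1/54 * x^0 * y^0 + 1/162 * x^0 * y^0 + 1/50 * x^0 * y^1 + 1/48 * x^0 * y^1 + 1/48 * x^0 * y^1 + 1/128 * x^0 * y^2 + 1/60 * x^0 * y^2 + 1/96 * x^0 * y^3 + 11/2592 * x^0 * y^3 + 11/2304 * x^0 * y^4 + 11/4608 * x^0 * y^6 + 1/48 * x^1 * y^0 + 1/45 * x^1 * y^0 + 1/40 * x^1 * y^1 + 1/36 * x^1 * y^1 + 1/36 * x^1 * y^1 + 7/120 * x^1 * y^2 + 13/400 * x^1 * y^3 + 37/8640 * x^1 * y^4 + 1/50 * x^2 * y^0 + 1/48 * x^2 * y^0 + 31/2160 * x^2 * y^0 + 11/384 * x^2 * y^1 + 1/300 * x^2 * y^1 + 1/48 * x^2 * y^2 + 13/720 * x^2 * y^2 + 107/5760 * x^2 * y^3 + 971/115200 * x^2 * y^5 + 1/72 * x^3 * y^0 + 5/324 * x^3 * y^0 + 49/4860 * x^3 * y^0 + 1/180 * x^3 *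 y^1 + 13/900 * x^3 * y^2 + 4861/194400 * x^3 * y^3 + 11/1152 * x^4 * y^0 + 49/2700 * x^4 * y^0 + 1/108 * x^4 * y^1 + 767/32400 * x^4 * y^1 + 1/768 * x^4 * y^2 + 1973/518400 * x^4 * y^4 + 11/2025 * x^5 * y^0 + 29/4500 * x^5 * y^1 + 59/4800 * x^5 * y^2 + 25/7776 * x^6 * y^0 + 413/194400 * x^6 * y^0 + 217/14400 * x^6 * y^1 + 230171/46656000 * x^6 * y^3 + 581/162000 * x^7 * y^0 + 2239/486000 * x^7 * y^1 + 71/311040 * x^8 * y^0 + 1633/648000 * x^8 * y^2 + 28469/17496000 * x^9 * y^0 + 136729/233280000 * x^10 * y^1 + 337561/2099520000 * x^12 * y^0 \<le> 1/64 * u^0 * (1-l^2)^0 + 1/30 * u^0 * (1-l^2)^0 + 1/54 * u^0 * (1-l^2)^0 + 1/162 * u^0 * (1-l^2)^0 + 1/50 * u^0 * (1-l^2)^1 + 1/48 * u^0 * (1-l^2)^1 + 1/48 * u^0 * (1-l^2)^1 + 1/128 * u^0 * (1-l^2)^2 + 1/60 * u^0 * (1-l^2)^2 + 1/96 * u^0 * (1-l^2)^3 + 11/2592 * u^0 * (1-l^2)^3 + 11/2304 * u^0 * (1-l^2)^4 + 11/4608 * u^0 * (1-l^2)^6 + 1/48 * u^1 * (1-l^2)^0 + 1/45 * u^1 * (1-l^2)^0 + 1/40 * u^1 * (1-l^2)^1 + 1/36 * u^1 * (1-l^2)^1 + 1/36 * u^1 * (1-l^2)^1 + 7/120 * u^1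 * (1-l^2)^2 + 13/400 * u^1 * (1-l^2)^3 + 37/8640 * u^1 * (1-l^2)^4 + 1/50 * u^2 * (1-l^2)^0 + 1/48 * u^2 * (1-l^2)^0 + 31/2160 * u^2 * (1-l^2)^0 + 11/384 * u^2 * (1-l^2)^1 + 1/300 * u^2 * (1-l^2)^1 + 1/48 * u^2 * (1-l^2)^2 + 13/720 * u^2 * (1-l^2)^2 + 107/5760 * u^2 * (1-l^2)^3 + 971/115200 * u^2 * (1-l^2)^5 + 1/72 * u^3 * (1-l^2)^0 + 5/324 * u^3 * (1-l^2)^0 + 49/4860 * u^3 * (1-l^2)^0 + 1/180 * u^3 * (1-l^2)^1 + 13/900 * u^3 * (1-l^2)^2 + 4861/194400 * u^3 * (1-l^2)^3 + 11/1152 * u^4 * (1-l^2)^0 + 49/2700 * u^4 * (1-l^2)^0 + 1/108 * u^4 * (1-l^2)^1 + 767/32400 * u^4 * (1-l^2)^1 + 1/768 * u^4 * (1-l^2)^2 + 1973/518400 * u^4 * (1-l^2)^4 + 11/2025 * u^5 * (1-l^2)^0 + 29/4500 * u^5 * (1-l^2)^1 + 59/4800 * u^5 * (1-l^2)^2 + 25/7776 * u^6 * (1-l^2)^0 + 413/194400 * u^6 * (1-l^2)^0 + 217/14400 * u^6 * (1-l^2)^1 + 230171/46656000 * u^6 * (1-l^2)^3 + 581/162000 * u^7 * (1-l^2)^0 + 2239/486000 * u^7 * (1-l^2)^1 + 71/311040 * u^8 * (1-l^2)^0 + 1633/648000 * u^8 * (1-l^2)^2 + 28469/17496000 * u^9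 * (1-l^2)^0 + 136729/233280000 * u^10 * (1-l^2)^1 + 337561/2099520000 * u^12 * (1-l^2)^0"
  using assms by (intro add_mono T_mono) (auto intro: order_trans[OF _ assms(4)] power_mono simp: diff_le_mono)
lemma realbound:
  fixes x y :: real
  assumes x0: "0 \<le> x" and x1: "x \<le> 1" and y0: "0 \<le> y" and yx: "y \<le> 1 - x^2"
  shows "1/64 * x^0 * y^0 + 1/30 * x^0 * y^0 + 1/54 * x^0 * y^0 + 1/162 * x^0 * y^0 + 1/50 * x^0 * y^1 + 1/48 * x^0 * y^1 + 1/48 * x^0 * y^1 + 1/128 * x^0 * y^2 + 1/60 * x^0 * y^2 + 1/96 * x^0 * y^3 + 11/2592 * x^0 * y^3 + 11/2304 * x^0 * y^4 + 11/4608 * x^0 * y^6 + 1/48 * x^1 * y^0 + 1/45 * x^1 * y^0 + 1/40 * x^1 * y^1 + 1/36 * x^1 * y^1 + 1/36 * x^1 * y^1 + 7/120 * x^1 * y^2 + 13/400 * x^1 * y^3 + 37/8640 * x^1 * y^4 + 1/50 * x^2 * y^0 + 1/48 * x^2 * y^0 + 31/2160 * x^2 * y^0 + 11/384 * x^2 * y^1 + 1/300 * x^2 * y^1 + 1/48 * x^2 * y^2 + 13/720 * x^2 * y^2 + 107/5760 * x^2 * y^3 + 971/115200 * x^2 * y^5 + 1/72 * x^3 * y^0 + 5/324 * x^3 * y^0 + 49/4860 * x^3 * y^0 + 1/180 * x^3 * y^1 + 13/900 * x^3 * y^2 + 4861/194400 * x^3 * y^3 + 11/1152 * x^4 * y^0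 + 49/2700 * x^4 * y^0 + 1/108 * x^4 * y^1 + 767/32400 * x^4 * y^1 + 1/768 * x^4 * y^2 + 1973/518400 * x^4 * y^4 + 11/2025 * x^5 * y^0 + 29/4500 * x^5 * y^1 + 59/4800 * x^5 * y^2 + 25/7776 * x^6 * y^0 + 413/194400 * x^6 * y^0 + 217/14400 * x^6 * y^1 + 230171/46656000 * x^6 * y^3 + 581/162000 * x^7 * y^0 + 2239/486000 * x^7 * y^1 + 71/311040 * x^8 * y^0 + 1633/648000 * x^8 * y^2 + 28469/17496000 * x^9 * y^0 + 136729/233280000 * x^10 * y^1 + 337561/2099520000 * x^12 * y^0 \<le> 0.428001"
proof -
  have yl: "y \<le> 1 - l^2" if "0 \<le> l" "l \<le> x" for l :: real
  proof -
    have "l^2 \<le> x^2" using that by (intro power_mono) auto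
    thus ?thesis using yx by linarith
  qed
  have c0: "1/64 * x^0 * y^0 + 1/30 * x^0 * y^0 + 1/54 * x^0 * y^0 + 1/162 * x^0 * y^0 + 1/50 * x^0 * y^1 + 1/48 * x^0 * y^1 + 1/48 * x^0 * y^1 + 1/128 * x^0 * y^2 + 1/60 * x^0 * y^2 + 1/96 * x^0 * y^3 + 11/2592 * x^0 * y^3 + 11/2304 * x^0 * y^4 + 11/4608 * x^0 * y^6 + 1/48 * x^1 * y^0 + 1/45 * x^1 * y^0 + 1/40 * x^1 * y^1 + 1/36 * x^1 * y^1 + 1/36 * x^1 * y^1 + 7/120 * x^1 * y^2 + 13/400 * x^1 * y^3 + 37/8640 * x^1 * y^4 + 1/50 * x^2 * y^0 + 1/48 * x^2 * y^0 + 31/2160 * x^2 * y^0 + 11/384 * x^2 * y^1 + 1/300 * x^2 * y^1 + 1/48 * x^2 * y^2 + 13/720 * x^2 * y^2 + 107/5760 * x^2 * y^3 + 971/115200 * x^2 * y^5 + 1/72 * x^3 * y^0 + 5/324 * x^3 * y^0 + 49/4860 * x^3 * y^0 + 1/180 * x^3 * y^1 + 13/900 * x^3 * y^2 + 4861/194400 * x^3 * y^3 + 11/1152 * x^4 * y^0 + 49/2700 * x^4 * y^0 + 1/108 * x^4 * y^1 + 767/32400 * x^4 * y^1 + 1/768 * x^4 * y^2 + 1973/518400 * x^4 * y^4 + 11/2025 * x^5 * y^0 + 29/4500 * x^5 * y^1 + 59/4800 * x^5 * y^2 + 25/7776 * x^6 * y^0 + 413/194400 * x^6 * y^0 + 217/14400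 * x^6 * y^1 + 230171/46656000 * x^6 * y^3 + 581/162000 * x^7 * y^0 + 2239/486000 * x^7 * y^1 + 71/311040 * x^8 * y^0 + 1633/648000 * x^8 * y^2 + 28469/17496000 * x^9 * y^0 + 136729/233280000 * x^10 * y^1 + 337561/2099520000 * x^12 * y^0 \<le> 0.428001" if "0 \<le> x" "x \<le> 1/4"
  proof -
    have "1/64 * x^0 * y^0 + 1/30 * x^0 * y^0 + 1/54 * x^0 * y^0 + 1/162 * x^0 * y^0 + 1/50 * x^0 * y^1 + 1/48 * x^0 * y^1 + 1/48 * x^0 * y^1 + 1/128 * x^0 * y^2 + 1/60 * x^0 * y^2 + 1/96 * x^0 * y^3 + 11/2592 * x^0 * y^3 + 11/2304 * x^0 * y^4 + 11/4608 * x^0 * y^6 + 1/48 * x^1 * y^0 + 1/45 * x^1 * y^0 + 1/40 * x^1 * y^1 + 1/36 * x^1 * y^1 + 1/36 * x^1 * y^1 + 7/120 * x^1 * y^2 + 13/400 * x^1 * y^3 + 37/8640 * x^1 * y^4 + 1/50 * x^2 * y^0 + 1/48 * x^2 * y^0 + 31/2160 * x^2 * y^0 + 11/384 * x^2 * y^1 + 1/300 * x^2 * y^1 + 1/48 * x^2 * y^2 + 13/720 * x^2 * y^2 + 107/5760 * x^2 * y^3 + 971/115200 * x^2 * y^5 + 1/72 * x^3 * y^0 + 5/324 * x^3 * y^0 + 49/4860 * x^3 * y^0 + 1/180 * x^3 * y^1 + 13/900 * x^3 * y^2 + 4861/194400 * x^3 * y^3 + 11/1152 * x^4 * y^0 +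 49/2700 * x^4 * y^0 + 1/108 * x^4 * y^1 + 767/32400 * x^4 * y^1 + 1/768 * x^4 * y^2 + 1973/518400 * x^4 * y^4 + 11/2025 * x^5 * y^0 + 29/4500 * x^5 * y^1 + 59/4800 * x^5 * y^2 + 25/7776 * x^6 * y^0 + 413/194400 * x^6 * y^0 + 217/14400 * x^6 * y^1 + 230171/46656000 * x^6 * y^3 + 581/162000 * x^7 * y^0 + 2239/486000 * x^7 * y^1 + 71/311040 * x^8 * y^0 + 1633/648000 * x^8 * y^2 + 28469/17496000 * x^9 * y^0 + 136729/233280000 * x^10 * y^1 + 337561/2099520000 * x^12 * y^0 \<le> 1/64 * (1/4)^0 * (1-(0)^2)^0 + 1/30 * (1/4)^0 * (1-(0)^2)^0 + 1/54 * (1/4)^0 * (1-(0)^2)^0 + 1/162 * (1/4)^0 * (1-(0)^2)^0 + 1/50 * (1/4)^0 * (1-(0)^2)^1 + 1/48 * (1/4)^0 * (1-(0)^2)^1 + 1/48 * (1/4)^0 * (1-(0)^2)^1 + 1/128 * (1/4)^0 * (1-(0)^2)^2 + 1/60 * (1/4)^0 * (1-(0)^2)^2 + 1/96 * (1/4)^0 * (1-(0)^2)^3 + 11/2592 * (1/4)^0 * (1-(0)^2)^3 + 11/2304 * (1/4)^0 * (1-(0)^2)^4 + 11/4608 * (1/4)^0 * (1-(0)^2)^6 + 1/48 * (1/4)^1 * (1-(0)^2)^0 + 1/45 * (1/4)^1 * (1-(0)^2)^0 + 1/40 * (1/4)^1 * (1-(0)^2)^1 + 1/36 * (1/4)^1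 * (1-(0)^2)^1 + 1/36 * (1/4)^1 * (1-(0)^2)^1 + 7/120 * (1/4)^1 * (1-(0)^2)^2 + 13/400 * (1/4)^1 * (1-(0)^2)^3 + 37/8640 * (1/4)^1 * (1-(0)^2)^4 + 1/50 * (1/4)^2 * (1-(0)^2)^0 + 1/48 * (1/4)^2 * (1-(0)^2)^0 + 31/2160 * (1/4)^2 * (1-(0)^2)^0 + 11/384 * (1/4)^2 * (1-(0)^2)^1 + 1/300 * (1/4)^2 * (1-(0)^2)^1 + 1/48 * (1/4)^2 * (1-(0)^2)^2 + 13/720 * (1/4)^2 * (1-(0)^2)^2 + 107/5760 * (1/4)^2 * (1-(0)^2)^3 + 971/115200 * (1/4)^2 * (1-(0)^2)^5 + 1/72 * (1/4)^3 * (1-(0)^2)^0 + 5/324 * (1/4)^3 * (1-(0)^2)^0 + 49/4860 * (1/4)^3 * (1-(0)^2)^0 + 1/180 * (1/4)^3 * (1-(0)^2)^1 + 13/900 * (1/4)^3 * (1-(0)^2)^2 + 4861/194400 * (1/4)^3 * (1-(0)^2)^3 + 11/1152 * (1/4)^4 * (1-(0)^2)^0 + 49/2700 * (1/4)^4 * (1-(0)^2)^0 + 1/108 * (1/4)^4 * (1-(0)^2)^1 + 767/32400 * (1/4)^4 * (1-(0)^2)^1 + 1/768 * (1/4)^4 * (1-(0)^2)^2 + 1973/518400 * (1/4)^4 * (1-(0)^2)^4 + 11/2025 * (1/4)^5 * (1-(0)^2)^0 + 29/4500 * (1/4)^5 * (1-(0)^2)^1 + 59/4800 * (1/4)^5 *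 (1-(0)^2)^2 + 25/7776 * (1/4)^6 * (1-(0)^2)^0 + 413/194400 * (1/4)^6 * (1-(0)^2)^0 + 217/14400 * (1/4)^6 * (1-(0)^2)^1 + 230171/46656000 * (1/4)^6 * (1-(0)^2)^3 + 581/162000 * (1/4)^7 * (1-(0)^2)^0 + 2239/486000 * (1/4)^7 * (1-(0)^2)^1 + 71/311040 * (1/4)^8 * (1-(0)^2)^0 + 1633/648000 * (1/4)^8 * (1-(0)^2)^2 + 28469/17496000 * (1/4)^9 * (1-(0)^2)^0 + 136729/233280000 * (1/4)^10 * (1-(0)^2)^1 + 337561/2099520000 * (1/4)^12 * (1-(0)^2)^0" by (rule realbound_piece[where l="0" and u="1/4"]) (use that x0 y0 yl[of "0"] in auto)
    also have "(1/64 * (1/4)^0 * (1-(0)^2)^0 + 1/30 * (1/4)^0 * (1-(0)^2)^0 + 1/54 * (1/4)^0 * (1-(0)^2)^0 + 1/162 * (1/4)^0 * (1-(0)^2)^0 + 1/50 * (1/4)^0 * (1-(0)^2)^1 + 1/48 * (1/4)^0 * (1-(0)^2)^1 + 1/48 * (1/4)^0 * (1-(0)^2)^1 + 1/128 * (1/4)^0 * (1-(0)^2)^2 + 1/60 * (1/4)^0 * (1-(0)^2)^2 + 1/96 * (1/4)^0 * (1-(0)^2)^3 + 11/2592 * (1/4)^0 * (1-(0)^2)^3 + 11/2304 * (1/4)^0 * (1-(0)^2)^4 + 11/4608 * (1/4)^0 * (1-(0)^2)^6 + 1/48 * (1/4)^1 * (1-(0)^2)^0 + 1/45 * (1/4)^1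 * (1-(0)^2)^0 + 1/40 * (1/4)^1 * (1-(0)^2)^1 + 1/36 * (1/4)^1 * (1-(0)^2)^1 + 1/36 * (1/4)^1 * (1-(0)^2)^1 + 7/120 * (1/4)^1 * (1-(0)^2)^2 + 13/400 * (1/4)^1 * (1-(0)^2)^3 + 37/8640 * (1/4)^1 * (1-(0)^2)^4 + 1/50 * (1/4)^2 * (1-(0)^2)^0 + 1/48 * (1/4)^2 * (1-(0)^2)^0 + 31/2160 * (1/4)^2 * (1-(0)^2)^0 + 11/384 * (1/4)^2 * (1-(0)^2)^1 + 1/300 * (1/4)^2 * (1-(0)^2)^1 + 1/48 * (1/4)^2 * (1-(0)^2)^2 + 13/720 * (1/4)^2 * (1-(0)^2)^2 + 107/5760 * (1/4)^2 * (1-(0)^2)^3 + 971/115200 * (1/4)^2 * (1-(0)^2)^5 + 1/72 * (1/4)^3 * (1-(0)^2)^0 + 5/324 * (1/4)^3 * (1-(0)^2)^0 + 49/4860 * (1/4)^3 * (1-(0)^2)^0 + 1/180 * (1/4)^3 * (1-(0)^2)^1 + 13/900 * (1/4)^3 * (1-(0)^2)^2 + 4861/194400 * (1/4)^3 * (1-(0)^2)^3 + 11/1152 * (1/4)^4 * (1-(0)^2)^0 + 49/2700 * (1/4)^4 * (1-(0)^2)^0 + 1/108 * (1/4)^4 * (1-(0)^2)^1 + 767/32400 * (1/4)^4 * (1-(0)^2)^1 + 1/768 * (1/4)^4 * (1-(0)^2)^2 + 1973/518400 * (1/4)^4 * (1-(0)^2)^4 + 11/2025 * (1/4)^5 * (1-(0)^2)^0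 + 29/4500 * (1/4)^5 * (1-(0)^2)^1 + 59/4800 * (1/4)^5 * (1-(0)^2)^2 + 25/7776 * (1/4)^6 * (1-(0)^2)^0 + 413/194400 * (1/4)^6 * (1-(0)^2)^0 + 217/14400 * (1/4)^6 * (1-(0)^2)^1 + 230171/46656000 * (1/4)^6 * (1-(0)^2)^3 + 581/162000 * (1/4)^7 * (1-(0)^2)^0 + 2239/486000 * (1/4)^7 * (1-(0)^2)^1 + 71/311040 * (1/4)^8 * (1-(0)^2)^0 + 1633/648000 * (1/4)^8 * (1-(0)^2)^2 + 28469/17496000 * (1/4)^9 * (1-(0)^2)^0 + 136729/233280000 * (1/4)^10 * (1-(0)^2)^1 + 337561/2099520000 * (1/4)^12 * (1-(0)^2)^0 :: real) \<le> 0.428001" by (simp add: power_divide)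
    finally show ?thesis .
  qed
  have c1: "1/64 * x^0 * y^0 + 1/30 * x^0 * y^0 + 1/54 * x^0 * y^0 + 1/162 * x^0 * y^0 + 1/50 * x^0 * y^1 + 1/48 * x^0 * y^1 + 1/48 * x^0 * y^1 + 1/128 * x^0 * y^2 + 1/60 * x^0 * y^2 + 1/96 * x^0 * y^3 + 11/2592 * x^0 * y^3 + 11/2304 * x^0 * y^4 + 11/4608 * x^0 * y^6 + 1/48 * x^1 * y^0 + 1/45 * x^1 * y^0 + 1/40 * x^1 * y^1 + 1/36 * x^1 * y^1 + 1/36 * x^1 * y^1 + 7/120 * x^1 * y^2 + 13/400 * x^1 * y^3 + 37/8640 * x^1 * y^4 + 1/50 * x^2 * y^0 + 1/48 * x^2 * y^0 + 31/2160 * x^2 * y^0 + 11/384 * x^2 * y^1 + 1/300 * x^2 * y^1 + 1/48 * x^2 * y^2 + 13/720 * x^2 * y^2 + 107/5760 * x^2 * y^3 + 971/115200 * x^2 * y^5 + 1/72 * x^3 * y^0 + 5/324 * x^3 * y^0 + 49/4860 * x^3 * y^0 + 1/180 * x^3 * y^1 + 13/900 * x^3 * y^2 + 4861/194400 * x^3 * y^3 + 11/1152 * x^4 * y^0 + 49/2700 * x^4 * y^0 + 1/108 * x^4 * y^1 + 767/32400 * x^4 * y^1 + 1/768 * x^4 * y^2 + 1973/518400 * x^4 * y^4 + 11/2025 * x^5 * y^0 + 29/4500 * x^5 * y^1 + 59/4800 * x^5 * y^2 + 25/7776 * x^6 * y^0 + 413/194400 * x^6 * y^0 + 217/14400 *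 x^6 * y^1 + 230171/46656000 * x^6 * y^3 + 581/162000 * x^7 * y^0 + 2239/486000 * x^7 * y^1 + 71/311040 * x^8 * y^0 + 1633/648000 * x^8 * y^2 + 28469/17496000 * x^9 * y^0 + 136729/233280000 * x^10 * y^1 + 337561/2099520000 * x^12 * y^0 \<le> 0.428001" if "1/4 \<le> x" "x \<le> 1/2"
  proof -
    have "1/64 * x^0 * y^0 + 1/30 * x^0 * y^0 + 1/54 * x^0 * y^0 + 1/162 * x^0 * y^0 + 1/50 * x^0 * y^1 + 1/48 * x^0 * y^1 + 1/48 * x^0 * y^1 + 1/128 * x^0 * y^2 + 1/60 * x^0 * y^2 + 1/96 * x^0 * y^3 + 11/2592 * x^0 * y^3 + 11/2304 * x^0 * y^4 + 11/4608 * x^0 * y^6 + 1/48 * x^1 * y^0 + 1/45 * x^1 * y^0 + 1/40 * x^1 * y^1 + 1/36 * x^1 * y^1 + 1/36 * x^1 * y^1 + 7/120 * x^1 * y^2 + 13/400 * x^1 * y^3 + 37/8640 * x^1 * y^4 + 1/50 * x^2 * y^0 + 1/48 * x^2 * y^0 + 31/2160 * x^2 * y^0 + 11/384 * x^2 * y^1 + 1/300 * x^2 * y^1 + 1/48 * x^2 * y^2 + 13/720 * x^2 * y^2 + 107/5760 * x^2 * y^3 + 971/115200 * x^2 * y^5 + 1/72 * x^3 * y^0 + 5/324 * x^3 * y^0 + 49/4860 * x^3 * y^0 + 1/180 * x^3 * y^1 + 13/900 * x^3 * y^2 + 4861/194400 * x^3 * y^3 + 11/1152 * x^4 * y^0 +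 49/2700 * x^4 * y^0 + 1/108 * x^4 * y^1 + 767/32400 * x^4 * y^1 + 1/768 * x^4 * y^2 + 1973/518400 * x^4 * y^4 + 11/2025 * x^5 * y^0 + 29/4500 * x^5 * y^1 + 59/4800 * x^5 * y^2 + 25/7776 * x^6 * y^0 + 413/194400 * x^6 * y^0 + 217/14400 * x^6 * y^1 + 230171/46656000 * x^6 * y^3 + 581/162000 * x^7 * y^0 + 2239/486000 * x^7 * y^1 + 71/311040 * x^8 * y^0 + 1633/648000 * x^8 * y^2 + 28469/17496000 * x^9 * y^0 + 136729/233280000 * x^10 * y^1 + 337561/2099520000 * x^12 * y^0 \<le> 1/64 * (1/2)^0 * (1-(1/4)^2)^0 + 1/30 * (1/2)^0 * (1-(1/4)^2)^0 + 1/54 * (1/2)^0 * (1-(1/4)^2)^0 + 1/162 * (1/2)^0 * (1-(1/4)^2)^0 + 1/50 * (1/2)^0 * (1-(1/4)^2)^1 + 1/48 * (1/2)^0 * (1-(1/4)^2)^1 + 1/48 * (1/2)^0 * (1-(1/4)^2)^1 + 1/128 * (1/2)^0 * (1-(1/4)^2)^2 + 1/60 * (1/2)^0 * (1-(1/4)^2)^2 + 1/96 * (1/2)^0 * (1-(1/4)^2)^3 + 11/2592 * (1/2)^0 * (1-(1/4)^2)^3 + 11/2304 * (1/2)^0 * (1-(1/4)^2)^4 + 11/4608 * (1/2)^0 * (1-(1/4)^2)^6 + 1/48 * (1/2)^1 * (1-(1/4)^2)^0 + 1/45 * (1/2)^1 * (1-(1/4)^2)^0 + 1/40 * (1/2)^1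 * (1-(1/4)^2)^1 + 1/36 * (1/2)^1 * (1-(1/4)^2)^1 + 1/36 * (1/2)^1 * (1-(1/4)^2)^1 + 7/120 * (1/2)^1 * (1-(1/4)^2)^2 + 13/400 * (1/2)^1 * (1-(1/4)^2)^3 + 37/8640 * (1/2)^1 * (1-(1/4)^2)^4 + 1/50 * (1/2)^2 * (1-(1/4)^2)^0 + 1/48 * (1/2)^2 * (1-(1/4)^2)^0 + 31/2160 * (1/2)^2 * (1-(1/4)^2)^0 + 11/384 * (1/2)^2 * (1-(1/4)^2)^1 + 1/300 * (1/2)^2 * (1-(1/4)^2)^1 + 1/48 * (1/2)^2 * (1-(1/4)^2)^2 + 13/720 * (1/2)^2 * (1-(1/4)^2)^2 + 107/5760 * (1/2)^2 * (1-(1/4)^2)^3 + 971/115200 * (1/2)^2 * (1-(1/4)^2)^5 + 1/72 * (1/2)^3 * (1-(1/4)^2)^0 + 5/324 * (1/2)^3 * (1-(1/4)^2)^0 + 49/4860 * (1/2)^3 * (1-(1/4)^2)^0 + 1/180 * (1/2)^3 * (1-(1/4)^2)^1 + 13/900 * (1/2)^3 * (1-(1/4)^2)^2 + 4861/194400 * (1/2)^3 * (1-(1/4)^2)^3 + 11/1152 * (1/2)^4 * (1-(1/4)^2)^0 + 49/2700 * (1/2)^4 * (1-(1/4)^2)^0 + 1/108 * (1/2)^4 * (1-(1/4)^2)^1 + 767/32400 * (1/2)^4 * (1-(1/4)^2)^1 + 1/768 * (1/2)^4 * (1-(1/4)^2)^2 + 1973/518400 * (1/2)^4 * (1-(1/4)^2)^4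 + 11/2025 * (1/2)^5 * (1-(1/4)^2)^0 + 29/4500 * (1/2)^5 * (1-(1/4)^2)^1 + 59/4800 * (1/2)^5 * (1-(1/4)^2)^2 + 25/7776 * (1/2)^6 * (1-(1/4)^2)^0 + 413/194400 * (1/2)^6 * (1-(1/4)^2)^0 + 217/14400 * (1/2)^6 * (1-(1/4)^2)^1 + 230171/46656000 * (1/2)^6 * (1-(1/4)^2)^3 + 581/162000 * (1/2)^7 * (1-(1/4)^2)^0 + 2239/486000 * (1/2)^7 * (1-(1/4)^2)^1 + 71/311040 * (1/2)^8 * (1-(1/4)^2)^0 + 1633/648000 * (1/2)^8 * (1-(1/4)^2)^2 + 28469/17496000 * (1/2)^9 * (1-(1/4)^2)^0 + 136729/233280000 * (1/2)^10 * (1-(1/4)^2)^1 + 337561/2099520000 * (1/2)^12 * (1-(1/4)^2)^0" by (rule realbound_piece[where l="1/4" and u="1/2"]) (use that x0 y0 yl[of "1/4"] in auto)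
    also have "(1/64 * (1/2)^0 * (1-(1/4)^2)^0 + 1/30 * (1/2)^0 * (1-(1/4)^2)^0 + 1/54 * (1/2)^0 * (1-(1/4)^2)^0 + 1/162 * (1/2)^0 * (1-(1/4)^2)^0 + 1/50 * (1/2)^0 * (1-(1/4)^2)^1 + 1/48 * (1/2)^0 * (1-(1/4)^2)^1 + 1/48 * (1/2)^0 * (1-(1/4)^2)^1 + 1/128 * (1/2)^0 * (1-(1/4)^2)^2 + 1/60 * (1/2)^0 * (1-(1/4)^2)^2 + 1/96 * (1/2)^0 * (1-(1/4)^2)^3 + 11/2592 * (1/2)^0 * (1-(1/4)^2)^3 + 11/2304 * (1/2)^0 * (1-(1/4)^2)^4 + 11/4608 * (1/2)^0 * (1-(1/4)^2)^6 + 1/48 * (1/2)^1 * (1-(1/4)^2)^0 + 1/45 * (1/2)^1 * (1-(1/4)^2)^0 + 1/40 * (1/2)^1 * (1-(1/4)^2)^1 + 1/36 * (1/2)^1 * (1-(1/4)^2)^1 + 1/36 * (1/2)^1 * (1-(1/4)^2)^1 + 7/120 * (1/2)^1 * (1-(1/4)^2)^2 + 13/400 * (1/2)^1 * (1-(1/4)^2)^3 + 37/8640 * (1/2)^1 * (1-(1/4)^2)^4 + 1/50 * (1/2)^2 * (1-(1/4)^2)^0 + 1/48 * (1/2)^2 * (1-(1/4)^2)^0 + 31/2160 * (1/2)^2 * (1-(1/4)^2)^0 + 11/384 * (1/2)^2 * (1-(1/4)^2)^1 + 1/300 * (1/2)^2 * (1-(1/4)^2)^1 + 1/48 * (1/2)^2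 * (1-(1/4)^2)^2 + 13/720 * (1/2)^2 * (1-(1/4)^2)^2 + 107/5760 * (1/2)^2 * (1-(1/4)^2)^3 + 971/115200 * (1/2)^2 * (1-(1/4)^2)^5 + 1/72 * (1/2)^3 * (1-(1/4)^2)^0 + 5/324 * (1/2)^3 * (1-(1/4)^2)^0 + 49/4860 * (1/2)^3 * (1-(1/4)^2)^0 + 1/180 * (1/2)^3 * (1-(1/4)^2)^1 + 13/900 * (1/2)^3 * (1-(1/4)^2)^2 + 4861/194400 * (1/2)^3 * (1-(1/4)^2)^3 + 11/1152 * (1/2)^4 * (1-(1/4)^2)^0 + 49/2700 * (1/2)^4 * (1-(1/4)^2)^0 + 1/108 * (1/2)^4 * (1-(1/4)^2)^1 + 767/32400 * (1/2)^4 * (1-(1/4)^2)^1 + 1/768 * (1/2)^4 * (1-(1/4)^2)^2 + 1973/518400 * (1/2)^4 * (1-(1/4)^2)^4 + 11/2025 * (1/2)^5 * (1-(1/4)^2)^0 + 29/4500 * (1/2)^5 * (1-(1/4)^2)^1 + 59/4800 * (1/2)^5 * (1-(1/4)^2)^2 + 25/7776 * (1/2)^6 * (1-(1/4)^2)^0 + 413/194400 * (1/2)^6 * (1-(1/4)^2)^0 + 217/14400 * (1/2)^6 * (1-(1/4)^2)^1 + 230171/46656000 * (1/2)^6 * (1-(1/4)^2)^3 + 581/162000 * (1/2)^7 * (1-(1/4)^2)^0 + 2239/486000 * (1/2)^7 * (1-(1/4)^2)^1 + 71/311040 * (1/2)^8 * (1-(1/4)^2)^0 + 1633/648000 * (1/2)^8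 * (1-(1/4)^2)^2 + 28469/17496000 * (1/2)^9 * (1-(1/4)^2)^0 + 136729/233280000 * (1/2)^10 * (1-(1/4)^2)^1 + 337561/2099520000 * (1/2)^12 * (1-(1/4)^2)^0 :: real) \<le> 0.428001" by (simp add: power_divide)
    finally show ?thesis .
  qed
  have c2: "1/64 * x^0 * y^0 + 1/30 * x^0 * y^0 + 1/54 * x^0 * y^0 + 1/162 * x^0 * y^0 + 1/50 * x^0 * y^1 + 1/48 * x^0 * y^1 + 1/48 * x^0 * y^1 + 1/128 * x^0 * y^2 + 1/60 * x^0 * y^2 + 1/96 * x^0 * y^3 + 11/2592 * x^0 * y^3 + 11/2304 * x^0 * y^4 + 11/4608 * x^0 * y^6 + 1/48 * x^1 * y^0 + 1/45 * x^1 * y^0 + 1/40 * x^1 * y^1 + 1/36 * x^1 * y^1 + 1/36 * x^1 * y^1 + 7/120 * x^1 * y^2 + 13/400 * x^1 * y^3 + 37/8640 * x^1 * y^4 + 1/50 * x^2 * y^0 + 1/48 * x^2 * y^0 + 31/2160 * x^2 * y^0 + 11/384 * x^2 * y^1 + 1/300 * x^2 * y^1 + 1/48 * x^2 * y^2 + 13/720 * x^2 * y^2 + 107/5760 * x^2 * y^3 + 971/115200 * x^2 * y^5 + 1/72 * x^3 * y^0 + 5/324 * x^3 * y^0 + 49/4860 * x^3 * y^0 + 1/180 * x^3 * y^1 + 13/900 * x^3 * y^2 + 4861/194400 * x^3 * y^3 + 11/1152 * x^4 * y^0 + 49/2700 * x^4 * y^0 + 1/108 * x^4 * y^1 + 767/32400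 * x^4 * y^1 + 1/768 * x^4 * y^2 + 1973/518400 * x^4 * y^4 + 11/2025 * x^5 * y^0 + 29/4500 * x^5 * y^1 + 59/4800 * x^5 * y^2 + 25/7776 * x^6 * y^0 + 413/194400 * x^6 * y^0 + 217/14400 * x^6 * y^1 + 230171/46656000 * x^6 * y^3 + 581/162000 * x^7 * y^0 + 2239/486000 * x^7 * y^1 + 71/311040 * x^8 * y^0 + 1633/648000 * x^8 * y^2 + 28469/17496000 * x^9 * y^0 + 136729/233280000 * x^10 * y^1 + 337561/2099520000 * x^12 * y^0 \<le> 0.428001" if "1/2 \<le> x" "x \<le> 3/4"
  proof -
    have "1/64 * x^0 * y^0 + 1/30 * x^0 * y^0 + 1/54 * x^0 * y^0 + 1/162 * x^0 * y^0 + 1/50 * x^0 * y^1 + 1/48 * x^0 * y^1 + 1/48 * x^0 * y^1 + 1/128 * x^0 * y^2 + 1/60 * x^0 * y^2 + 1/96 * x^0 * y^3 + 11/2592 * x^0 * y^3 + 11/2304 * x^0 * y^4 + 11/4608 * x^0 * y^6 + 1/48 * x^1 * y^0 + 1/45 * x^1 * y^0 + 1/40 * x^1 * y^1 + 1/36 * x^1 * y^1 + 1/36 * x^1 * y^1 + 7/120 * x^1 * y^2 + 13/400 * x^1 * y^3 + 37/8640 * x^1 * y^4 + 1/50 * x^2 * y^0 + 1/48 * x^2 * y^0 + 31/2160 * x^2 * y^0 + 11/384 * x^2 * y^1 + 1/300 * x^2 * y^1 + 1/48 * x^2 * y^2 + 13/720 * x^2 * y^2 + 107/5760 * x^2 *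 y^3 + 971/115200 * x^2 * y^5 + 1/72 * x^3 * y^0 + 5/324 * x^3 * y^0 + 49/4860 * x^3 * y^0 + 1/180 * x^3 * y^1 + 13/900 * x^3 * y^2 + 4861/194400 * x^3 * y^3 + 11/1152 * x^4 * y^0 + 49/2700 * x^4 * y^0 + 1/108 * x^4 * y^1 + 767/32400 * x^4 * y^1 + 1/768 * x^4 * y^2 + 1973/518400 * x^4 * y^4 + 11/2025 * x^5 * y^0 + 29/4500 * x^5 * y^1 + 59/4800 * x^5 * y^2 + 25/7776 * x^6 * y^0 + 413/194400 * x^6 * y^0 + 217/14400 * x^6 * y^1 + 230171/46656000 * x^6 * y^3 + 581/162000 * x^7 * y^0 + 2239/486000 * x^7 * y^1 + 71/311040 * x^8 * y^0 + 1633/648000 * x^8 * y^2 + 28469/17496000 * x^9 * y^0 + 136729/233280000 * x^10 * y^1 + 337561/2099520000 * x^12 * y^0 \<le> 1/64 * (3/4)^0 * (1-(1/2)^2)^0 + 1/30 * (3/4)^0 * (1-(1/2)^2)^0 + 1/54 * (3/4)^0 * (1-(1/2)^2)^0 + 1/162 * (3/4)^0 * (1-(1/2)^2)^0 + 1/50 * (3/4)^0 * (1-(1/2)^2)^1 + 1/48 * (3/4)^0 * (1-(1/2)^2)^1 + 1/48 * (3/4)^0 * (1-(1/2)^2)^1 + 1/128 * (3/4)^0 * (1-(1/2)^2)^2 + 1/60 * (3/4)^0 * (1-(1/2)^2)^2 + 1/96 * (3/4)^0 * (1-(1/2)^2)^3 + 11/2592 * (3/4)^0 * (1-(1/2)^2)^3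 + 11/2304 * (3/4)^0 * (1-(1/2)^2)^4 + 11/4608 * (3/4)^0 * (1-(1/2)^2)^6 + 1/48 * (3/4)^1 * (1-(1/2)^2)^0 + 1/45 * (3/4)^1 * (1-(1/2)^2)^0 + 1/40 * (3/4)^1 * (1-(1/2)^2)^1 + 1/36 * (3/4)^1 * (1-(1/2)^2)^1 + 1/36 * (3/4)^1 * (1-(1/2)^2)^1 + 7/120 * (3/4)^1 * (1-(1/2)^2)^2 + 13/400 * (3/4)^1 * (1-(1/2)^2)^3 + 37/8640 * (3/4)^1 * (1-(1/2)^2)^4 + 1/50 * (3/4)^2 * (1-(1/2)^2)^0 + 1/48 * (3/4)^2 * (1-(1/2)^2)^0 + 31/2160 * (3/4)^2 * (1-(1/2)^2)^0 + 11/384 * (3/4)^2 * (1-(1/2)^2)^1 + 1/300 * (3/4)^2 * (1-(1/2)^2)^1 + 1/48 * (3/4)^2 * (1-(1/2)^2)^2 + 13/720 * (3/4)^2 * (1-(1/2)^2)^2 + 107/5760 * (3/4)^2 * (1-(1/2)^2)^3 + 971/115200 * (3/4)^2 * (1-(1/2)^2)^5 + 1/72 * (3/4)^3 * (1-(1/2)^2)^0 + 5/324 * (3/4)^3 * (1-(1/2)^2)^0 + 49/4860 * (3/4)^3 * (1-(1/2)^2)^0 + 1/180 * (3/4)^3 * (1-(1/2)^2)^1 + 13/900 * (3/4)^3 * (1-(1/2)^2)^2 + 4861/194400 * (3/4)^3 * (1-(1/2)^2)^3 + 11/1152 * (3/4)^4 * (1-(1/2)^2)^0 + 49/2700 * (3/4)^4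 * (1-(1/2)^2)^0 + 1/108 * (3/4)^4 * (1-(1/2)^2)^1 + 767/32400 * (3/4)^4 * (1-(1/2)^2)^1 + 1/768 * (3/4)^4 * (1-(1/2)^2)^2 + 1973/518400 * (3/4)^4 * (1-(1/2)^2)^4 + 11/2025 * (3/4)^5 * (1-(1/2)^2)^0 + 29/4500 * (3/4)^5 * (1-(1/2)^2)^1 + 59/4800 * (3/4)^5 * (1-(1/2)^2)^2 + 25/7776 * (3/4)^6 * (1-(1/2)^2)^0 + 413/194400 * (3/4)^6 * (1-(1/2)^2)^0 + 217/14400 * (3/4)^6 * (1-(1/2)^2)^1 + 230171/46656000 * (3/4)^6 * (1-(1/2)^2)^3 + 581/162000 * (3/4)^7 * (1-(1/2)^2)^0 + 2239/486000 * (3/4)^7 * (1-(1/2)^2)^1 + 71/311040 * (3/4)^8 * (1-(1/2)^2)^0 + 1633/648000 * (3/4)^8 * (1-(1/2)^2)^2 + 28469/17496000 * (3/4)^9 * (1-(1/2)^2)^0 + 136729/233280000 * (3/4)^10 * (1-(1/2)^2)^1 + 337561/2099520000 * (3/4)^12 * (1-(1/2)^2)^0" by (rule realbound_piece[where l="1/2" and u="3/4"]) (use that x0 y0 yl[of "1/2"] in auto)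
    also have "(1/64 * (3/4)^0 * (1-(1/2)^2)^0 + 1/30 * (3/4)^0 * (1-(1/2)^2)^0 + 1/54 * (3/4)^0 * (1-(1/2)^2)^0 + 1/162 * (3/4)^0 * (1-(1/2)^2)^0 + 1/50 * (3/4)^0 * (1-(1/2)^2)^1 + 1/48 * (3/4)^0 * (1-(1/2)^2)^1 + 1/48 * (3/4)^0 * (1-(1/2)^2)^1 + 1/128 * (3/4)^0 * (1-(1/2)^2)^2 + 1/60 * (3/4)^0 * (1-(1/2)^2)^2 + 1/96 * (3/4)^0 * (1-(1/2)^2)^3 + 11/2592 * (3/4)^0 * (1-(1/2)^2)^3 + 11/2304 * (3/4)^0 * (1-(1/2)^2)^4 + 11/4608 * (3/4)^0 * (1-(1/2)^2)^6 + 1/48 * (3/4)^1 * (1-(1/2)^2)^0 + 1/45 * (3/4)^1 * (1-(1/2)^2)^0 + 1/40 * (3/4)^1 * (1-(1/2)^2)^1 + 1/36 * (3/4)^1 * (1-(1/2)^2)^1 + 1/36 * (3/4)^1 * (1-(1/2)^2)^1 + 7/120 * (3/4)^1 * (1-(1/2)^2)^2 + 13/400 * (3/4)^1 * (1-(1/2)^2)^3 + 37/8640 * (3/4)^1 * (1-(1/2)^2)^4 + 1/50 * (3/4)^2 * (1-(1/2)^2)^0 + 1/48 * (3/4)^2 * (1-(1/2)^2)^0 + 31/2160 * (3/4)^2 * (1-(1/2)^2)^0 + 11/384 * (3/4)^2 * (1-(1/2)^2)^1 + 1/300 * (3/4)^2 * (1-(1/2)^2)^1 + 1/48 * (3/4)^2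 * (1-(1/2)^2)^2 + 13/720 * (3/4)^2 * (1-(1/2)^2)^2 + 107/5760 * (3/4)^2 * (1-(1/2)^2)^3 + 971/115200 * (3/4)^2 * (1-(1/2)^2)^5 + 1/72 * (3/4)^3 * (1-(1/2)^2)^0 + 5/324 * (3/4)^3 * (1-(1/2)^2)^0 + 49/4860 * (3/4)^3 * (1-(1/2)^2)^0 + 1/180 * (3/4)^3 * (1-(1/2)^2)^1 + 13/900 * (3/4)^3 * (1-(1/2)^2)^2 + 4861/194400 * (3/4)^3 * (1-(1/2)^2)^3 + 11/1152 * (3/4)^4 * (1-(1/2)^2)^0 + 49/2700 * (3/4)^4 * (1-(1/2)^2)^0 + 1/108 * (3/4)^4 * (1-(1/2)^2)^1 + 767/32400 * (3/4)^4 * (1-(1/2)^2)^1 + 1/768 * (3/4)^4 * (1-(1/2)^2)^2 + 1973/518400 * (3/4)^4 * (1-(1/2)^2)^4 + 11/2025 * (3/4)^5 * (1-(1/2)^2)^0 + 29/4500 * (3/4)^5 * (1-(1/2)^2)^1 + 59/4800 * (3/4)^5 * (1-(1/2)^2)^2 + 25/7776 * (3/4)^6 * (1-(1/2)^2)^0 + 413/194400 * (3/4)^6 * (1-(1/2)^2)^0 + 217/14400 * (3/4)^6 * (1-(1/2)^2)^1 + 230171/46656000 * (3/4)^6 * (1-(1/2)^2)^3 + 581/162000 * (3/4)^7 * (1-(1/2)^2)^0 + 2239/486000 * (3/4)^7 * (1-(1/2)^2)^1 + 71/311040 * (3/4)^8 * (1-(1/2)^2)^0 + 1633/648000 * (3/4)^8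 * (1-(1/2)^2)^2 + 28469/17496000 * (3/4)^9 * (1-(1/2)^2)^0 + 136729/233280000 * (3/4)^10 * (1-(1/2)^2)^1 + 337561/2099520000 * (3/4)^12 * (1-(1/2)^2)^0 :: real) \<le> 0.428001" by (simp add: power_divide)
    finally show ?thesis .
  qed
  have c3: "1/64 * x^0 * y^0 + 1/30 * x^0 * y^0 + 1/54 * x^0 * y^0 + 1/162 * x^0 * y^0 + 1/50 * x^0 * y^1 + 1/48 * x^0 * y^1 + 1/48 * x^0 * y^1 + 1/128 * x^0 * y^2 + 1/60 * x^0 * y^2 + 1/96 * x^0 * y^3 + 11/2592 * x^0 * y^3 + 11/2304 * x^0 * y^4 + 11/4608 * x^0 * y^6 + 1/48 * x^1 * y^0 + 1/45 * x^1 * y^0 + 1/40 * x^1 * y^1 + 1/36 * x^1 * y^1 + 1/36 * x^1 * y^1 + 7/120 * x^1 * y^2 + 13/400 * x^1 * y^3 + 37/8640 * x^1 * y^4 + 1/50 * x^2 * y^0 + 1/48 * x^2 * y^0 + 31/2160 * x^2 * y^0 + 11/384 * x^2 * y^1 + 1/300 * x^2 * y^1 + 1/48 * x^2 * y^2 + 13/720 * x^2 * y^2 + 107/5760 * x^2 * y^3 + 971/115200 * x^2 * y^5 + 1/72 * x^3 * y^0 + 5/324 * x^3 * y^0 + 49/4860 * x^3 * y^0 + 1/180 * x^3 * y^1 + 13/900 * x^3 * y^2 + 4861/194400 * x^3 * y^3 + 11/1152 * x^4 * y^0 + 49/2700 * x^4 * y^0 + 1/108 * x^4 * y^1 + 767/32400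 * x^4 * y^1 + 1/768 * x^4 * y^2 + 1973/518400 * x^4 * y^4 + 11/2025 * x^5 * y^0 + 29/4500 * x^5 * y^1 + 59/4800 * x^5 * y^2 + 25/7776 * x^6 * y^0 + 413/194400 * x^6 * y^0 + 217/14400 * x^6 * y^1 + 230171/46656000 * x^6 * y^3 + 581/162000 * x^7 * y^0 + 2239/486000 * x^7 * y^1 + 71/311040 * x^8 * y^0 + 1633/648000 * x^8 * y^2 + 28469/17496000 * x^9 * y^0 + 136729/233280000 * x^10 * y^1 + 337561/2099520000 * x^12 * y^0 \<le> 0.428001" if "3/4 \<le> x" "x \<le> 1"
  proof -
    have "1/64 * x^0 * y^0 + 1/30 * x^0 * y^0 + 1/54 * x^0 * y^0 + 1/162 * x^0 * y^0 + 1/50 * x^0 * y^1 + 1/48 * x^0 * y^1 + 1/48 * x^0 * y^1 + 1/128 * x^0 * y^2 + 1/60 * x^0 * y^2 + 1/96 * x^0 * y^3 + 11/2592 * x^0 * y^3 + 11/2304 * x^0 * y^4 + 11/4608 * x^0 * y^6 + 1/48 * x^1 * y^0 + 1/45 * x^1 * y^0 + 1/40 * x^1 * y^1 + 1/36 * x^1 * y^1 + 1/36 * x^1 * y^1 + 7/120 * x^1 * y^2 + 13/400 * x^1 * y^3 + 37/8640 * x^1 * y^4 + 1/50 * x^2 * y^0 + 1/48 * x^2 * y^0 + 31/2160 * x^2 * y^0 + 11/384 * x^2 * y^1 + 1/300 * x^2 * y^1 + 1/48 * x^2 * y^2 + 13/720 * x^2 * y^2 + 107/5760 * x^2 * y^3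 + 971/115200 * x^2 * y^5 + 1/72 * x^3 * y^0 + 5/324 * x^3 * y^0 + 49/4860 * x^3 * y^0 + 1/180 * x^3 * y^1 + 13/900 * x^3 * y^2 + 4861/194400 * x^3 * y^3 + 11/1152 * x^4 * y^0 + 49/2700 * x^4 * y^0 + 1/108 * x^4 * y^1 + 767/32400 * x^4 * y^1 + 1/768 * x^4 * y^2 + 1973/518400 * x^4 * y^4 + 11/2025 * x^5 * y^0 + 29/4500 * x^5 * y^1 + 59/4800 * x^5 * y^2 + 25/7776 * x^6 * y^0 + 413/194400 * x^6 * y^0 + 217/14400 * x^6 * y^1 + 230171/46656000 * x^6 * y^3 + 581/162000 * x^7 * y^0 + 2239/486000 * x^7 * y^1 + 71/311040 * x^8 * y^0 + 1633/648000 * x^8 * y^2 + 28469/17496000 * x^9 * y^0 + 136729/233280000 * x^10 * y^1 + 337561/2099520000 * x^12 * y^0 \<le> 1/64 * (1)^0 * (1-(3/4)^2)^0 + 1/30 * (1)^0 * (1-(3/4)^2)^0 + 1/54 * (1)^0 * (1-(3/4)^2)^0 + 1/162 * (1)^0 * (1-(3/4)^2)^0 + 1/50 * (1)^0 * (1-(3/4)^2)^1 + 1/48 * (1)^0 * (1-(3/4)^2)^1 + 1/48 * (1)^0 * (1-(3/4)^2)^1 + 1/128 * (1)^0 * (1-(3/4)^2)^2 + 1/60 * (1)^0 * (1-(3/4)^2)^2 + 1/96 * (1)^0 * (1-(3/4)^2)^3 + 11/2592 * (1)^0 * (1-(3/4)^2)^3 + 11/2304 * (1)^0 * (1-(3/4)^2)^4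 + 11/4608 * (1)^0 * (1-(3/4)^2)^6 + 1/48 * (1)^1 * (1-(3/4)^2)^0 + 1/45 * (1)^1 * (1-(3/4)^2)^0 + 1/40 * (1)^1 * (1-(3/4)^2)^1 + 1/36 * (1)^1 * (1-(3/4)^2)^1 + 1/36 * (1)^1 * (1-(3/4)^2)^1 + 7/120 * (1)^1 * (1-(3/4)^2)^2 + 13/400 * (1)^1 * (1-(3/4)^2)^3 + 37/8640 * (1)^1 * (1-(3/4)^2)^4 + 1/50 * (1)^2 * (1-(3/4)^2)^0 + 1/48 * (1)^2 * (1-(3/4)^2)^0 + 31/2160 * (1)^2 * (1-(3/4)^2)^0 + 11/384 * (1)^2 * (1-(3/4)^2)^1 + 1/300 * (1)^2 * (1-(3/4)^2)^1 + 1/48 * (1)^2 * (1-(3/4)^2)^2 + 13/720 * (1)^2 * (1-(3/4)^2)^2 + 107/5760 * (1)^2 * (1-(3/4)^2)^3 + 971/115200 * (1)^2 * (1-(3/4)^2)^5 + 1/72 * (1)^3 * (1-(3/4)^2)^0 + 5/324 * (1)^3 * (1-(3/4)^2)^0 + 49/4860 * (1)^3 * (1-(3/4)^2)^0 + 1/180 * (1)^3 * (1-(3/4)^2)^1 + 13/900 * (1)^3 * (1-(3/4)^2)^2 + 4861/194400 * (1)^3 * (1-(3/4)^2)^3 + 11/1152 * (1)^4 * (1-(3/4)^2)^0 + 49/2700 * (1)^4 * (1-(3/4)^2)^0 + 1/108 * (1)^4 * (1-(3/4)^2)^1 + 767/32400 * (1)^4 * (1-(3/4)^2)^1 + 1/768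 * (1)^4 * (1-(3/4)^2)^2 + 1973/518400 * (1)^4 * (1-(3/4)^2)^4 + 11/2025 * (1)^5 * (1-(3/4)^2)^0 + 29/4500 * (1)^5 * (1-(3/4)^2)^1 + 59/4800 * (1)^5 * (1-(3/4)^2)^2 + 25/7776 * (1)^6 * (1-(3/4)^2)^0 + 413/194400 * (1)^6 * (1-(3/4)^2)^0 + 217/14400 * (1)^6 * (1-(3/4)^2)^1 + 230171/46656000 * (1)^6 * (1-(3/4)^2)^3 + 581/162000 * (1)^7 * (1-(3/4)^2)^0 + 2239/486000 * (1)^7 * (1-(3/4)^2)^1 + 71/311040 * (1)^8 * (1-(3/4)^2)^0 + 1633/648000 * (1)^8 * (1-(3/4)^2)^2 + 28469/17496000 * (1)^9 * (1-(3/4)^2)^0 + 136729/233280000 * (1)^10 * (1-(3/4)^2)^1 + 337561/2099520000 * (1)^12 * (1-(3/4)^2)^0" by (rule realbound_piece[where l="3/4" and u="1"]) (use that x0 y0 yl[of "3/4"] in auto)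
    also have "(1/64 * (1)^0 * (1-(3/4)^2)^0 + 1/30 * (1)^0 * (1-(3/4)^2)^0 + 1/54 * (1)^0 * (1-(3/4)^2)^0 + 1/162 * (1)^0 * (1-(3/4)^2)^0 + 1/50 * (1)^0 * (1-(3/4)^2)^1 + 1/48 * (1)^0 * (1-(3/4)^2)^1 + 1/48 * (1)^0 * (1-(3/4)^2)^1 + 1/128 * (1)^0 * (1-(3/4)^2)^2 + 1/60 * (1)^0 * (1-(3/4)^2)^2 + 1/96 * (1)^0 * (1-(3/4)^2)^3 + 11/2592 * (1)^0 * (1-(3/4)^2)^3 + 11/2304 * (1)^0 * (1-(3/4)^2)^4 + 11/4608 * (1)^0 * (1-(3/4)^2)^6 + 1/48 * (1)^1 * (1-(3/4)^2)^0 + 1/45 * (1)^1 * (1-(3/4)^2)^0 + 1/40 * (1)^1 * (1-(3/4)^2)^1 + 1/36 * (1)^1 * (1-(3/4)^2)^1 + 1/36 * (1)^1 * (1-(3/4)^2)^1 + 7/120 * (1)^1 * (1-(3/4)^2)^2 + 13/400 * (1)^1 * (1-(3/4)^2)^3 + 37/8640 * (1)^1 * (1-(3/4)^2)^4 + 1/50 * (1)^2 * (1-(3/4)^2)^0 + 1/48 * (1)^2 * (1-(3/4)^2)^0 + 31/2160 * (1)^2 * (1-(3/4)^2)^0 + 11/384 * (1)^2 * (1-(3/4)^2)^1 + 1/300 * (1)^2 * (1-(3/4)^2)^1 + 1/48 * (1)^2 * (1-(3/4)^2)^2 + 13/720 * (1)^2 * (1-(3/4)^2)^2 + 107/5760 *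 (1)^2 * (1-(3/4)^2)^3 + 971/115200 * (1)^2 * (1-(3/4)^2)^5 + 1/72 * (1)^3 * (1-(3/4)^2)^0 + 5/324 * (1)^3 * (1-(3/4)^2)^0 + 49/4860 * (1)^3 * (1-(3/4)^2)^0 + 1/180 * (1)^3 * (1-(3/4)^2)^1 + 13/900 * (1)^3 * (1-(3/4)^2)^2 + 4861/194400 * (1)^3 * (1-(3/4)^2)^3 + 11/1152 * (1)^4 * (1-(3/4)^2)^0 + 49/2700 * (1)^4 * (1-(3/4)^2)^0 + 1/108 * (1)^4 * (1-(3/4)^2)^1 + 767/32400 * (1)^4 * (1-(3/4)^2)^1 + 1/768 * (1)^4 * (1-(3/4)^2)^2 + 1973/518400 * (1)^4 * (1-(3/4)^2)^4 + 11/2025 * (1)^5 * (1-(3/4)^2)^0 + 29/4500 * (1)^5 * (1-(3/4)^2)^1 + 59/4800 * (1)^5 * (1-(3/4)^2)^2 + 25/7776 * (1)^6 * (1-(3/4)^2)^0 + 413/194400 * (1)^6 * (1-(3/4)^2)^0 + 217/14400 * (1)^6 * (1-(3/4)^2)^1 + 230171/46656000 * (1)^6 * (1-(3/4)^2)^3 + 581/162000 * (1)^7 * (1-(3/4)^2)^0 + 2239/486000 * (1)^7 * (1-(3/4)^2)^1 + 71/311040 * (1)^8 * (1-(3/4)^2)^0 + 1633/648000 * (1)^8 * (1-(3/4)^2)^2 + 28469/17496000 * (1)^9 * (1-(3/4)^2)^0 + 136729/233280000 * (1)^10 * (1-(3/4)^2)^1 + 337561/2099520000 * (1)^12 * (1-(3/4)^2)^0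 :: real) \<le> 0.428001" by (simp add: power_divide)
    finally show ?thesis .
  qed
  show ?thesis
  proof (cases "x \<le> 1/2")
    case True thus ?thesis using c0 c1 x0 by (cases "x \<le> 1/4") auto
  next
    case False thus ?thesis using c2 c3 x1 by (cases "x \<le> 3/4") auto
  qed
qed
lemma coeffs_solve:
  fixes a c e p :: "nat \<Rightarrow> complex"
  assumes e0: "e 0 = 1" and c0: "c 0 = 0" and p0: "p 0 = 0" and a0: "a 0 = 0" and a1: "a 1 = 1"
  and H1_1: "e 0 * e 1 + e 1 * e 0 = 2 * (c 0 * e 1 + c 1 * e 0)"
  and H1_2: "e 0 * e 2 + e 1 * e 1 + e 2 * e 0 = 2 * (c 0 * e 2 + c 1 * e 1 + c 2 * e 0)"
  and H1_3: "e 0 * e 3 + e 1 * e 2 + e 2 * e 1 + e 3 * e 0 = 2 * (c 0 * e 3 + c 1 * e 2 + c 2 * e 1 + c 3 * e 0)"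
  and H1_4: "e 0 * e 4 + e 1 * e 3 + e 2 * e 2 + e 3 * e 1 + e 4 * e 0 = 2 * (c 0 * e 4 + c 1 * e 3 + c 2 * e 2 + c 3 * e 1 + c 4 * e 0)"
  and H1_5: "e 0 * e 5 + e 1 * e 4 + e 2 * e 3 + e 3 * e 2 + e 4 * e 1 + e 5 * e 0 = 2 * (c 0 * e 5 + c 1 * e 4 + c 2 * e 3 + c 3 * e 2 + c 4 * e 1 + c 5 * e 0)"
  and H1_6: "e 0 * e 6 + e 1 * e 5 + e 2 * e 4 + e 3 * e 3 + e 4 * e 2 + e 5 * e 1 + e 6 * e 0 = 2 * (c 0 * e 6 + c 1 * e 5 + c 2 * e 4 + c 3 * e 3 + c 4 * e 2 + c 5 * e 1 + c 6 * e 0)"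
  and H2_0: "1 * e 1 = e 0 * (1 * p 1)"
  and H2_1: "2 * e 2 = e 0 * (2 * p 2) + e 1 * (1 * p 1)"
  and H2_2: "3 * e 3 = e 0 * (3 * p 3) + e 1 * (2 * p 2) + e 2 * (1 * p 1)"
  and H2_3: "4 * e 4 = e 0 * (4 * p 4) + e 1 * (3 * p 3) + e 2 * (2 * p 2) + e 3 * (1 * p 1)"
  and H2_4: "5 * e 5 = e 0 * (5 * p 5) + e 1 * (4 * p 4) + e 2 * (3 * p 3) + e 3 * (2 * p 2) + e 4 * (1 * p 1)"
  and H2_5: "6 * e 6 = e 0 * (6 * p 6) + e 1 * (5 * p 5) + e 2 * (4 * p 4) + e 3 * (3 * p 3) + e 4 * (2 * p 2) + e 5 * (1 * p 1)"
  and H3_2: "2 * a 2 = a 0 * (0 + p 2) + a 1 * (0 + p 1) + a 2 * (1 + p 0)"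
  and H3_3: "3 * a 3 = a 0 * (0 + p 3) + a 1 * (0 + p 2) + a 2 * (0 + p 1) + a 3 * (1 + p 0)"
  and H3_4: "4 * a 4 = a 0 * (0 + p 4) + a 1 * (0 + p 3) + a 2 * (0 + p 2) + a 3 * (0 + p 1) + a 4 * (1 + p 0)"
  and H3_5: "5 * a 5 = a 0 * (0 + p 5) + a 1 * (0 + p 4) + a 2 * (0 + p 3) + a 3 * (0 + p 2) + a 4 * (0 + p 1) + a 5 * (1 + p 0)"
  and H3_6: "6 * a 6 = a 0 * (0 + p 6) + a 1 * (0 + p 5) + a 2 * (0 + p 4) + a 3 * (0 + p 3) + a 4 * (0 + p 2) + a 5 * (0 + p 1) + a 6 * (1 + p 0)"
  and H3_7: "7 * a 7 = a 0 * (0 + p 7) + a 1 * (0 + p 6) + a 2 * (0 + p 5) + a 3 * (0 + p 4) + a 4 * (0 + p 3) + a 5 * (0 + p 2) + a 6 * (0 + p 1) + a 7 * (1 + p 0)"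
  shows "a 2 = c 1 \<and> a 3 = (1/2) * c 2 + (1/2) * (c 1)^2 \<and> a 4 = (1/3) * c 3 + (1/2) * c 1 * c 2 + (1/9) * (c 1)^3 \<and> a 5 = (1/4) * c 4 + (1/8) * (c 2)^2 + (1/3) * c 1 * c 3 + (1/8) * (c 1)^2 * c 2 - (1/72) * (c 1)^4 \<and> a 6 = (1/5) * c 5 + (1/6) * c 2 * c 3 + (1/4) * c 1 * c 4 + (1/40) * c 1 * (c 2)^2 + (1/15) * (c 1)^2 * c 3 - (5/72) * (c 1)^3 * c 2 - (1/225) * (c 1)^5 \<and> a 7 = (1/6) * c 6 + (1/18) * (c 3)^2 + (1/8) * c 2 * c 4 - (1/144) * (c 2)^3 + (1/5) * c 1 * c 5 + (1/24) * (c 1)^2 * c 4 - (1/10) * (c 1)^2 * (c 2)^2 - (17/270) * (c 1)^3 * c 3 - (1/144) * (c 1)^4 * c 2 + (281/32400) * (c 1)^6"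
proof -
  have E1: "e 1 = c 1"
    using H1_1 by (simp only:  e0 c0) algebra
  have E2: "e 2 = c 2 + (1/2) * (c 1)^2"
    using H1_2 by (simp only: E1 e0 c0) algebra
  have E3: "e 3 = c 3 + c 1 * c 2"
    using H1_3 by (simp only: E1 E2 e0 c0) algebra
  have E4: "e 4 = c 4 + (1/2) * (c 2)^2 + c 1 * c 3 - (1/8) * (c 1)^4"
    using H1_4 by (simp only: E1 E2 E3 e0 c0) algebra
  have E5: "e 5 = c 5 + c 2 * c 3 + c 1 * c 4 - (1/2) * (c 1)^3 * c 2"
    using H1_5 by (simp only: E1 E2 E3 E4 e0 c0) algebra
  have E6: "e 6 = c 6 + (1/2) * (c 3)^2 + c 2 * c 4 + c 1 * c 5 - (3/4) * (c 1)^2 * (c 2)^2 - (1/2) * (c 1)^3 * c 3 + (1/16) * (c 1)^6"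
    using H1_6 by (simp only: E1 E2 E3 E4 E5 e0 c0) algebra
  have P1: "p 1 = c 1"
    using H2_0 by (simp only: E1  e0 p0) algebra
  have P2: "p 2 = c 2"
    using H2_1 by (simp only: E1 E2 P1 e0 p0) algebra
  have P3: "p 3 = c 3 - (1/6) * (c 1)^3"
    using H2_2 by (simp only: E1 E2 E3 P1 P2 e0 p0) algebra
  have P4: "p 4 = c 4 - (1/2) * (c 1)^2 * c 2"
    using H2_3 by (simp only: E1 E2 E3 E4 P1 P2 P3 e0 p0) algebra
  have P5: "p 5 = c 5 - (1/2) * c 1 * (c 2)^2 - (1/2) * (c 1)^2 * c 3 + (3/40) * (c 1)^5"
    using H2_4 by (simp only: E1 E2 E3 E4 E5 P1 P2 P3 P4 e0 p0) algebra
  have P6: "p 6 = c 6 - (1/6) * (c 2)^3 - c 1 * c 2 * c 3 - (1/2) * (c 1)^2 * c 4 + (3/8) * (c 1)^4 * c 2"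
    using H2_5 by (simp only: E1 E2 E3 E4 E5 E6 P1 P2 P3 P4 P5 e0 p0) algebra
  have A2: "a 2 = c 1"
    using H3_2 by (simp only: P1  a0 a1 p0) algebra
  have A3: "a 3 = (1/2) * c 2 + (1/2) * (c 1)^2"
    using H3_3 by (simp only: P1 P2 A2 a0 a1 p0) algebra
  have A4: "a 4 = (1/3) * c 3 + (1/2) * c 1 * c 2 + (1/9) * (c 1)^3"
    using H3_4 by (simp only: P1 P2 P3 A2 A3 a0 a1 p0) algebra
  have A5: "a 5 = (1/4) * c 4 + (1/8) * (c 2)^2 + (1/3) * c 1 * c 3 + (1/8) * (c 1)^2 * c 2 - (1/72) * (c 1)^4"
    using H3_5 by (simp only: P1 P2 P3 P4 A2 A3 A4 a0 a1 p0) algebra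
  have A6: "a 6 = (1/5) * c 5 + (1/6) * c 2 * c 3 + (1/4) * c 1 * c 4 + (1/40) * c 1 * (c 2)^2 + (1/15) * (c 1)^2 * c 3 - (5/72) * (c 1)^3 * c 2 - (1/225) * (c 1)^5"
    using H3_6 by (simp only: P1 P2 P3 P4 P5 A2 A3 A4 A5 a0 a1 p0) algebra
  have A7: "a 7 = (1/6) * c 6 + (1/18) * (c 3)^2 + (1/8) * c 2 * c 4 - (1/144) * (c 2)^3 + (1/5) * c 1 * c 5 + (1/24) * (c 1)^2 * c 4 - (1/10) * (c 1)^2 * (c 2)^2 - (17/270) * (c 1)^3 * c 3 - (1/144) * (c 1)^4 * c 2 + (281/32400) * (c 1)^6"
    using H3_7 by (simp only: P1 P2 P3 P4 P5 P6 A2 A3 A4 A5 A6 a0 a1 p0) algebra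
  show ?thesis using A2 A3 A4 A5 A6 A7 by blast
qed
lemma perm4:
  fixes M :: "nat \<Rightarrow> nat \<Rightarrow> complex"
  shows "(\<Sum>p | p permutes {0..<4::nat}. of_int (sign p) * (\<Prod>i<4. M i (p i))) =
   M 0 0 * M 1 1 * M 2 2 * M 3 3 - M 0 0 * M 1 1 * M 2 3 * M 3 2
 - M 0 0 * M 1 2 * M 2 1 * M 3 3 + M 0 0 * M 1 2 * M 2 3 * M 3 1
 + M 0 0 * M 1 3 * M 2 1 * M 3 2 - M 0 0 * M 1 3 * M 2 2 * M 3 1
 - M 0 1 * M 1 0 * M 2 2 * M 3 3 + M 0 1 * M 1 0 * M 2 3 * M 3 2
 + M 0 1 * M 1 2 * M 2 0 * M 3 3 - M 0 1 * M 1 2 * M 2 3 * M 3 0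
 - M 0 1 * M 1 3 * M 2 0 * M 3 2 + M 0 1 * M 1 3 * M 2 2 * M 3 0
 + M 0 2 * M 1 0 * M 2 1 * M 3 3 - M 0 2 * M 1 0 * M 2 3 * M 3 1
 - M 0 2 * M 1 1 * M 2 0 * M 3 3 + M 0 2 * M 1 1 * M 2 3 * M 3 0
 + M 0 2 * M 1 3 * M 2 0 * M 3 1 - M 0 2 * M 1 3 * M 2 1 * M 3 0
 - M 0 3 * M 1 0 * M 2 1 * M 3 2 + M 0 3 * M 1 0 * M 2 2 * M 3 1
 + M 0 3 * M 1 1 * M 2 0 * M 3 2 - M 0 3 * M 1 1 * M 2 2 * M 3 0
 - M 0 3 * M 1 2 * M 2 0 * M 3 1 + M 0 3 * M 1 2 * M 2 1 * M 3 0"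
proof -
  have e: "{0..<4::nat} = insert 0 (insert 1 (insert 2 {3}))" by auto
  have f1: "finite (insert 1 (insert 2 {3::nat}))" "0 \<notin> insert 1 (insert 2 {3::nat})" by auto
  have f2: "finite (insert 2 {3::nat})" "1 \<notin> insert 2 {3::nat}" by auto
  have f3: "finite {3::nat}" "2 \<notin> {3::nat}" by auto
  have l: "(\<Prod>i<(4::nat). g i) = g 0 * g 1 * g 2 * (g 3::complex)" for g :: "nat \<Rightarrow> complex"
    by (simp add: numeral_eq_Suc lessThan_Suc)
  have sg: "permutation q \<Longrightarrow> sign (Transposition.transpose a b \<circ> q) = (if a = b then 1 else -1) * sign q" for a b :: nat and q
    by (simp add: sign_compose permutation_swap_id sign_swap_id)
  have pc: "permutation (Transposition.transpose a b \<circ> q)" if "permutation q" for a b :: nat and q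
    using that by (simp add: permutation_compose permutation_swap_id)
  show ?thesis
    unfolding e l
    unfolding sum_over_permutations_insert[OF f1]
    unfolding sum_over_permutations_insert[OF f2]
    unfolding sum_over_permutations_insert[OF f3]
    unfolding permutes_sing
    by (simp add: sg pc permutation_swap_id sign_swap_id transpose_def algebra_simps)
qed

lemma Hid:
  fixes c1 c2 c3 c4 c5 c6 a2 a3 a4 a5 a6 a7 :: complex
  assumes A2: "a2 = c1"
  and A3: "a3 = (1/2) * c2 + (1/2) * c1^2"
  and A4: "a4 = (1/3) * c3 + (1/2) * c1 * c2 + (1/9) * c1^3"
  and A5: "a5 = (1/4) * c4 + (1/8) * c2^2 + (1/3) * c1 * c3 + (1/8) * c1^2 * c2 - (1/72) * c1^4"
  and A6: "a6 = (1/5) * c5 + (1/6) * c2 * c3 + (1/4) * c1 * c4 + (1/40) * c1 * c2^2 + (1/15) * c1^2 * c3 - (5/72) * c1^3 * c2 - (1/225) * c1^5"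
  and A7: "a7 = (1/6) * c6 + (1/18) * c3^2 + (1/8) * c2 * c4 - (1/144) * c2^3 + (1/5) * c1 * c5 + (1/24) * c1^2 * c4 - (1/10) * c1^2 * c2^2 - (17/270) * c1^3 * c3 - (1/144) * c1^4 * c2 + (281/32400) * c1^6"
  shows "1 * a3 * a5 * a7 - 1 * a3 * a6 * a6 - 1 * a4 * a4 * a7 + 1 * a4 * a6 * a5 + 1 * a5 * a4 * a6 - 1 * a5 * a5 * a5 - a2 * a2 * a5 * a7 + a2 * a2 * a6 * a6 + a2 * a4 * a3 * a7 - a2 * a4 * a6 * a4 - a2 * a5 * a3 * a6 + a2 * a5 * a5 * a4 + a3 * a2 * a4 * a7 - a3 * a2 * a6 * a5 - a3 * a3 * a3 * a7 + a3 * a3 * a6 * a4 + a3 * a5 * a3 * a5 - a3 * a5 * a4 * a4 - a4 * a2 * a4 * a6 + a4 * a2 * a5 * a5 + a4 * a3 * a3 * a6 - a4 * a3 * a5 * a4 - a4 * a4 * a3 * a5 + a4 * a4 * a4 * a4 = (-1/64) * c1^0 * c2^0 * c3^0 * c4^3 * c5^0 * c6^0 + (1/30) * c1^0 * c2^0 * c3^1 * c4^1 * c5^1 * c6^0 + (-1/54) * c1^0 * c2^0 * c3^2 * c4^0 * c5^0 * c6^1 + (1/162) * c1^0 * c2^0 * c3^4 * c4^0 * c5^0 * c6^0 + (-1/50) * c1^0 * c2^1 * c3^0 * c4^0 * c5^2 * c6^0 + (1/48) * c1^0 * c2^1 * c3^0 * c4^1 * c5^0 * c6^1 + (-1/48)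 * c1^0 * c2^1 * c3^2 * c4^1 * c5^0 * c6^0 + (1/128) * c1^0 * c2^2 * c3^0 * c4^2 * c5^0 * c6^0 + (1/60) * c1^0 * c2^2 * c3^1 * c4^0 * c5^1 * c6^0 + (-1/96) * c1^0 * c2^3 * c3^0 * c4^0 * c5^0 * c6^1 + (11/2592) * c1^0 * c2^3 * c3^2 * c4^0 * c5^0 * c6^0 + (-11/2304) * c1^0 * c2^4 * c3^0 * c4^1 * c5^0 * c6^0 + (11/4608) * c1^0 * c2^6 * c3^0 * c4^0 * c5^0 * c6^0 + (1/48) * c1^1 * c2^0 * c3^1 * c4^2 * c5^0 * c6^0 + (-1/45) * c1^1 * c2^0 * c3^2 * c4^0 * c5^1 * c6^0 + (-1/40) * c1^1 * c2^1 * c3^0 * c4^1 * c5^1 * c6^0 + (1/36) * c1^1 * c2^1 * c3^1 * c4^0 * c5^0 * c6^1 + (1/36) * c1^1 * c2^1 * c3^3 * c4^0 * c5^0 * c6^0 + (-7/120) * c1^1 * c2^2 * c3^1 * c4^1 * c5^0 * c6^0 + (13/400) * c1^1 * c2^3 * c3^0 * c4^0 * c5^1 * c6^0 + (-37/8640) * c1^1 * c2^4 * c3^1 * c4^0 * c5^0 * c6^0 + (1/50) * c1^2 * c2^0 * c3^0 * c4^0 * c5^2 * c6^0 + (-1/48) * c1^2 * c2^0 * c3^0 * c4^1 * c5^0 * c6^1 + (-31/2160) * c1^2 * c2^0 * c3^2 * c4^1 * c5^0 * c6^0 + (11/384) * c1^2 * c2^1 * c3^0 * c4^2 * c5^0 *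 c6^0 + (1/300) * c1^2 * c2^1 * c3^1 * c4^0 * c5^1 * c6^0 + (-1/48) * c1^2 * c2^2 * c3^0 * c4^0 * c5^0 * c6^1 + (-13/720) * c1^2 * c2^2 * c3^2 * c4^0 * c5^0 * c6^0 + (107/5760) * c1^2 * c2^3 * c3^0 * c4^1 * c5^0 * c6^0 + (-971/115200) * c1^2 * c2^5 * c3^0 * c4^0 * c5^0 * c6^0 + (-1/72) * c1^3 * c2^0 * c3^0 * c4^1 * c5^1 * c6^0 + (5/324) * c1^3 * c2^0 * c3^1 * c4^0 * c5^0 * c6^1 + (49/4860) * c1^3 * c2^0 * c3^3 * c4^0 * c5^0 * c6^0 + (1/180) * c1^3 * c2^1 * c3^1 * c4^1 * c5^0 * c6^0 + (-13/900) * c1^3 * c2^2 * c3^0 * c4^0 * c5^1 * c6^0 + (4861/194400) * c1^3 * c2^3 * c3^1 * c4^0 * c5^0 * c6^0 + (11/1152) * c1^4 * c2^0 * c3^0 * c4^2 * c5^0 * c6^0 + (-49/2700) * c1^4 * c2^0 * c3^1 * c4^0 * c5^1 * c6^0 + (1/108) * c1^4 * c2^1 * c3^0 * c4^0 * c5^0 * c6^1 + (-767/32400) * c1^4 * c2^1 * c3^2 * c4^0 * c5^0 * c6^0 + (-1/768) * c1^4 * c2^2 * c3^0 * c4^1 * c5^0 * c6^0 + (-1973/518400) * c1^4 * c2^4 * c3^0 * c4^0 * c5^0 * c6^0 + (11/2025) * c1^5 * c2^0 * c3^1 * c4^1 * c5^0 * c6^0 + (29/4500) * c1^5 * c2^1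 * c3^0 * c4^0 * c5^1 * c6^0 + (59/4800) * c1^5 * c2^2 * c3^1 * c4^0 * c5^0 * c6^0 + (-25/7776) * c1^6 * c2^0 * c3^0 * c4^0 * c5^0 * c6^1 + (413/194400) * c1^6 * c2^0 * c3^2 * c4^0 * c5^0 * c6^0 + (-217/14400) * c1^6 * c2^1 * c3^0 * c4^1 * c5^0 * c6^0 + (-230171/46656000) * c1^6 * c2^3 * c3^0 * c4^0 * c5^0 * c6^0 + (581/162000) * c1^7 * c2^0 * c3^0 * c4^0 * c5^1 * c6^0 + (2239/486000) * c1^7 * c2^1 * c3^1 * c4^0 * c5^0 * c6^0 + (71/311040) * c1^8 * c2^0 * c3^0 * c4^1 * c5^0 * c6^0 + (1633/648000) * c1^8 * c2^2 * c3^0 * c4^0 * c5^0 * c6^0 + (-28469/17496000) * c1^9 * c2^0 * c3^1 * c4^0 * c5^0 * c6^0 + (-136729/233280000) * c1^10 * c2^1 * c3^0 * c4^0 * c5^0 * c6^0 + (337561/2099520000) * c1^12 * c2^0 * c3^0 * c4^0 * c5^0 * c6^0"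
  unfolding A2 A3 A4 A5 A6 A7 by algebra

lemma final_bound:
  fixes c1 c2 c3 c4 c5 c6 :: complex
  assumes b1: "cmod c1 \<le> 1" and b3: "cmod c3 \<le> 1" and b4: "cmod c4 \<le> 1" and b5: "cmod c5 \<le> 1" and b6: "cmod c6 \<le> 1"
    and b2: "cmod c2 \<le> 1 - (cmod c1)^2"
  shows "cmod ((-1/64) * c1^0 * c2^0 * c3^0 * c4^3 * c5^0 * c6^0 + (1/30) * c1^0 * c2^0 * c3^1 * c4^1 * c5^1 * c6^0 + (-1/54) * c1^0 * c2^0 * c3^2 * c4^0 * c5^0 * c6^1 + (1/162) * c1^0 * c2^0 * c3^4 * c4^0 * c5^0 * c6^0 + (-1/50) * c1^0 * c2^1 * c3^0 * c4^0 * c5^2 * c6^0 + (1/48) * c1^0 * c2^1 * c3^0 * c4^1 * c5^0 * c6^1 + (-1/48) * c1^0 * c2^1 * c3^2 * c4^1 * c5^0 * c6^0 + (1/128) * c1^0 * c2^2 * c3^0 * c4^2 * c5^0 * c6^0 + (1/60) * c1^0 * c2^2 * c3^1 * c4^0 * c5^1 * c6^0 + (-1/96) * c1^0 * c2^3 * c3^0 * c4^0 * c5^0 * c6^1 + (11/2592) * c1^0 * c2^3 * c3^2 * c4^0 * c5^0 * c6^0 + (-11/2304) * c1^0 * c2^4 * c3^0 * c4^1 * c5^0 * c6^0 + (11/4608) * c1^0 * c2^6 * c3^0 * c4^0 * c5^0 * c6^0 + (1/48) * c1^1 * c2^0 * c3^1 * c4^2 * c5^0 * c6^0 + (-1/45)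 * c1^1 * c2^0 * c3^2 * c4^0 * c5^1 * c6^0 + (-1/40) * c1^1 * c2^1 * c3^0 * c4^1 * c5^1 * c6^0 + (1/36) * c1^1 * c2^1 * c3^1 * c4^0 * c5^0 * c6^1 + (1/36) * c1^1 * c2^1 * c3^3 * c4^0 * c5^0 * c6^0 + (-7/120) * c1^1 * c2^2 * c3^1 * c4^1 * c5^0 * c6^0 + (13/400) * c1^1 * c2^3 * c3^0 * c4^0 * c5^1 * c6^0 + (-37/8640) * c1^1 * c2^4 * c3^1 * c4^0 * c5^0 * c6^0 + (1/50) * c1^2 * c2^0 * c3^0 * c4^0 * c5^2 * c6^0 + (-1/48) * c1^2 * c2^0 * c3^0 * c4^1 * c5^0 * c6^1 + (-31/2160) * c1^2 * c2^0 * c3^2 * c4^1 * c5^0 * c6^0 + (11/384) * c1^2 * c2^1 * c3^0 * c4^2 * c5^0 * c6^0 + (1/300) * c1^2 * c2^1 * c3^1 * c4^0 * c5^1 * c6^0 + (-1/48) * c1^2 * c2^2 * c3^0 * c4^0 * c5^0 * c6^1 + (-13/720) * c1^2 * c2^2 * c3^2 * c4^0 * c5^0 * c6^0 + (107/5760) * c1^2 * c2^3 * c3^0 * c4^1 * c5^0 * c6^0 + (-971/115200) * c1^2 * c2^5 * c3^0 * c4^0 * c5^0 * c6^0 + (-1/72) * c1^3 * c2^0 * c3^0 * c4^1 * c5^1 * c6^0 + (5/324) * c1^3 * c2^0 * c3^1 * c4^0 * c5^0 * c6^1 + (49/4860) * c1^3 * c2^0 * c3^3 * c4^0 * c5^0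 * c6^0 + (1/180) * c1^3 * c2^1 * c3^1 * c4^1 * c5^0 * c6^0 + (-13/900) * c1^3 * c2^2 * c3^0 * c4^0 * c5^1 * c6^0 + (4861/194400) * c1^3 * c2^3 * c3^1 * c4^0 * c5^0 * c6^0 + (11/1152) * c1^4 * c2^0 * c3^0 * c4^2 * c5^0 * c6^0 + (-49/2700) * c1^4 * c2^0 * c3^1 * c4^0 * c5^1 * c6^0 + (1/108) * c1^4 * c2^1 * c3^0 * c4^0 * c5^0 * c6^1 + (-767/32400) * c1^4 * c2^1 * c3^2 * c4^0 * c5^0 * c6^0 + (-1/768) * c1^4 * c2^2 * c3^0 * c4^1 * c5^0 * c6^0 + (-1973/518400) * c1^4 * c2^4 * c3^0 * c4^0 * c5^0 * c6^0 + (11/2025) * c1^5 * c2^0 * c3^1 * c4^1 * c5^0 * c6^0 + (29/4500) * c1^5 * c2^1 * c3^0 * c4^0 * c5^1 * c6^0 + (59/4800) * c1^5 * c2^2 * c3^1 * c4^0 * c5^0 * c6^0 + (-25/7776) * c1^6 * c2^0 * c3^0 * c4^0 * c5^0 * c6^1 + (413/194400) * c1^6 * c2^0 * c3^2 * c4^0 * c5^0 * c6^0 + (-217/14400) * c1^6 * c2^1 * c3^0 * c4^1 * c5^0 * c6^0 + (-230171/46656000) * c1^6 * c2^3 * c3^0 * c4^0 * c5^0 * c6^0 + (581/162000) * c1^7 * c2^0 * c3^0 * c4^0 * c5^1 * c6^0 + (2239/486000) * c1^7 * c2^1 * c3^1 * c4^0 * c5^0 * c6^0 + (71/311040) * c1^8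 * c2^0 * c3^0 * c4^1 * c5^0 * c6^0 + (1633/648000) * c1^8 * c2^2 * c3^0 * c4^0 * c5^0 * c6^0 + (-28469/17496000) * c1^9 * c2^0 * c3^1 * c4^0 * c5^0 * c6^0 + (-136729/233280000) * c1^10 * c2^1 * c3^0 * c4^0 * c5^0 * c6^0 + (337561/2099520000) * c1^12 * c2^0 * c3^0 * c4^0 * c5^0 * c6^0) \<le> 0.428001"
proof -
  have "cmod ((-1/64) * c1^0 * c2^0 * c3^0 * c4^3 * c5^0 * c6^0 + (1/30) * c1^0 * c2^0 * c3^1 * c4^1 * c5^1 * c6^0 + (-1/54) * c1^0 * c2^0 * c3^2 * c4^0 * c5^0 * c6^1 + (1/162) * c1^0 * c2^0 * c3^4 * c4^0 * c5^0 * c6^0 + (-1/50) * c1^0 * c2^1 * c3^0 * c4^0 * c5^2 * c6^0 + (1/48) * c1^0 * c2^1 * c3^0 * c4^1 * c5^0 * c6^1 + (-1/48) * c1^0 * c2^1 * c3^2 * c4^1 * c5^0 * c6^0 + (1/128) * c1^0 * c2^2 * c3^0 * c4^2 * c5^0 * c6^0 + (1/60) * c1^0 * c2^2 * c3^1 * c4^0 * c5^1 * c6^0 + (-1/96) * c1^0 * c2^3 * c3^0 * c4^0 * c5^0 * c6^1 + (11/2592) * c1^0 * c2^3 * c3^2 * c4^0 * c5^0 * c6^0 + (-11/2304) * c1^0 * c2^4 * c3^0 * c4^1 * c5^0 * c6^0 + (11/4608) * c1^0 * c2^6 * c3^0 * c4^0 * c5^0 * c6^0 + (1/48) * c1^1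 * c2^0 * c3^1 * c4^2 * c5^0 * c6^0 + (-1/45) * c1^1 * c2^0 * c3^2 * c4^0 * c5^1 * c6^0 + (-1/40) * c1^1 * c2^1 * c3^0 * c4^1 * c5^1 * c6^0 + (1/36) * c1^1 * c2^1 * c3^1 * c4^0 * c5^0 * c6^1 + (1/36) * c1^1 * c2^1 * c3^3 * c4^0 * c5^0 * c6^0 + (-7/120) * c1^1 * c2^2 * c3^1 * c4^1 * c5^0 * c6^0 + (13/400) * c1^1 * c2^3 * c3^0 * c4^0 * c5^1 * c6^0 + (-37/8640) * c1^1 * c2^4 * c3^1 * c4^0 * c5^0 * c6^0 + (1/50) * c1^2 * c2^0 * c3^0 * c4^0 * c5^2 * c6^0 + (-1/48) * c1^2 * c2^0 * c3^0 * c4^1 * c5^0 * c6^1 + (-31/2160) * c1^2 * c2^0 * c3^2 * c4^1 * c5^0 * c6^0 + (11/384) * c1^2 * c2^1 * c3^0 * c4^2 * c5^0 * c6^0 + (1/300) * c1^2 * c2^1 * c3^1 * c4^0 * c5^1 * c6^0 + (-1/48) * c1^2 * c2^2 * c3^0 * c4^0 * c5^0 * c6^1 + (-13/720) * c1^2 * c2^2 * c3^2 * c4^0 * c5^0 * c6^0 + (107/5760) * c1^2 * c2^3 * c3^0 * c4^1 * c5^0 * c6^0 + (-971/115200) * c1^2 * c2^5 * c3^0 * c4^0 * c5^0 * c6^0 + (-1/72) * c1^3 * c2^0 * c3^0 * c4^1 * c5^1 * c6^0 + (5/324) * c1^3 * c2^0 * c3^1 * c4^0 * c5^0 * c6^1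 + (49/4860) * c1^3 * c2^0 * c3^3 * c4^0 * c5^0 * c6^0 + (1/180) * c1^3 * c2^1 * c3^1 * c4^1 * c5^0 * c6^0 + (-13/900) * c1^3 * c2^2 * c3^0 * c4^0 * c5^1 * c6^0 + (4861/194400) * c1^3 * c2^3 * c3^1 * c4^0 * c5^0 * c6^0 + (11/1152) * c1^4 * c2^0 * c3^0 * c4^2 * c5^0 * c6^0 + (-49/2700) * c1^4 * c2^0 * c3^1 * c4^0 * c5^1 * c6^0 + (1/108) * c1^4 * c2^1 * c3^0 * c4^0 * c5^0 * c6^1 + (-767/32400) * c1^4 * c2^1 * c3^2 * c4^0 * c5^0 * c6^0 + (-1/768) * c1^4 * c2^2 * c3^0 * c4^1 * c5^0 * c6^0 + (-1973/518400) * c1^4 * c2^4 * c3^0 * c4^0 * c5^0 * c6^0 + (11/2025) * c1^5 * c2^0 * c3^1 * c4^1 * c5^0 * c6^0 + (29/4500) * c1^5 * c2^1 * c3^0 * c4^0 * c5^1 * c6^0 + (59/4800) * c1^5 * c2^2 * c3^1 * c4^0 * c5^0 * c6^0 + (-25/7776) * c1^6 * c2^0 * c3^0 * c4^0 * c5^0 * c6^1 + (413/194400) * c1^6 * c2^0 * c3^2 * c4^0 * c5^0 * c6^0 + (-217/14400) * c1^6 * c2^1 * c3^0 * c4^1 * c5^0 * c6^0 + (-230171/46656000) * c1^6 * c2^3 * c3^0 * c4^0 * c5^0 * c6^0 + (581/162000) * c1^7 * c2^0 * c3^0 * c4^0 * c5^1 * c6^0 + (2239/486000) * c1^7 * c2^1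 * c3^1 * c4^0 * c5^0 * c6^0 + (71/311040) * c1^8 * c2^0 * c3^0 * c4^1 * c5^0 * c6^0 + (1633/648000) * c1^8 * c2^2 * c3^0 * c4^0 * c5^0 * c6^0 + (-28469/17496000) * c1^9 * c2^0 * c3^1 * c4^0 * c5^0 * c6^0 + (-136729/233280000) * c1^10 * c2^1 * c3^0 * c4^0 * c5^0 * c6^0 + (337561/2099520000) * c1^12 * c2^0 * c3^0 * c4^0 * c5^0 * c6^0) \<le> cmod (-1/64::complex) * (cmod c1)^0 * (cmod c2)^0 + cmod (1/30::complex) * (cmod c1)^0 * (cmod c2)^0 + cmod (-1/54::complex) * (cmod c1)^0 * (cmod c2)^0 + cmod (1/162::complex) * (cmod c1)^0 * (cmod c2)^0 + cmod (-1/50::complex) * (cmod c1)^0 * (cmod c2)^1 + cmod (1/48::complex) * (cmod c1)^0 * (cmod c2)^1 + cmod (-1/48::complex) * (cmod c1)^0 * (cmod c2)^1 + cmod (1/128::complex) * (cmod c1)^0 * (cmod c2)^2 + cmod (1/60::complex) * (cmod c1)^0 * (cmod c2)^2 + cmod (-1/96::complex) * (cmod c1)^0 * (cmod c2)^3 + cmod (11/2592::complex) * (cmod c1)^0 * (cmod c2)^3 + cmod (-11/2304::complex) * (cmod c1)^0 * (cmod c2)^4 + cmod (11/4608::complex) * (cmod c1)^0 * (cmod c2)^6 + cmod (1/48::complex) * (cmod c1)^1 * (cmod c2)^0 + cmod (-1/45::complex) * (cmod c1)^1 * (cmod c2)^0 + cmod (-1/40::complex) * (cmod c1)^1 * (cmod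 c2)^1 + cmod (1/36::complex) * (cmod c1)^1 * (cmod c2)^1 + cmod (1/36::complex) * (cmod c1)^1 * (cmod c2)^1 + cmod (-7/120::complex) * (cmod c1)^1 * (cmod c2)^2 + cmod (13/400::complex) * (cmod c1)^1 * (cmod c2)^3 + cmod (-37/8640::complex) * (cmod c1)^1 * (cmod c2)^4 + cmod (1/50::complex) * (cmod c1)^2 * (cmod c2)^0 + cmod (-1/48::complex) * (cmod c1)^2 * (cmod c2)^0 + cmod (-31/2160::complex) * (cmod c1)^2 * (cmod c2)^0 + cmod (11/384::complex) * (cmod c1)^2 * (cmod c2)^1 + cmod (1/300::complex) * (cmod c1)^2 * (cmod c2)^1 + cmod (-1/48::complex) * (cmod c1)^2 * (cmod c2)^2 + cmod (-13/720::complex) * (cmod c1)^2 * (cmod c2)^2 + cmod (107/5760::complex) * (cmod c1)^2 * (cmod c2)^3 + cmod (-971/115200::complex) * (cmod c1)^2 * (cmod c2)^5 + cmod (-1/72::complex) * (cmod c1)^3 * (cmod c2)^0 + cmod (5/324::complex) * (cmod c1)^3 * (cmod c2)^0 + cmod (49/4860::complex) * (cmod c1)^3 * (cmod c2)^0 + cmod (1/180::complex) * (cmod c1)^3 * (cmod c2)^1 + cmod (-13/900::complex) * (cmod c1)^3 * (cmod c2)^2 + cmod (4861/194400::complex) * (cmod c1)^3 * (cmod c2)^3 + cmod (11/1152::complex) * (cmod c1)^4 * (cmod c2)^0 + cmod (-49/2700::complex) * (cmod c1)^4 * (cmod c2)^0 + cmod (1/108::complex) * (cmod c1)^4 * (cmod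 c2)^1 + cmod (-767/32400::complex) * (cmod c1)^4 * (cmod c2)^1 + cmod (-1/768::complex) * (cmod c1)^4 * (cmod c2)^2 + cmod (-1973/518400::complex) * (cmod c1)^4 * (cmod c2)^4 + cmod (11/2025::complex) * (cmod c1)^5 * (cmod c2)^0 + cmod (29/4500::complex) * (cmod c1)^5 * (cmod c2)^1 + cmod (59/4800::complex) * (cmod c1)^5 * (cmod c2)^2 + cmod (-25/7776::complex) * (cmod c1)^6 * (cmod c2)^0 + cmod (413/194400::complex) * (cmod c1)^6 * (cmod c2)^0 + cmod (-217/14400::complex) * (cmod c1)^6 * (cmod c2)^1 + cmod (-230171/46656000::complex) * (cmod c1)^6 * (cmod c2)^3 + cmod (581/162000::complex) * (cmod c1)^7 * (cmod c2)^0 + cmod (2239/486000::complex) * (cmod c1)^7 * (cmod c2)^1 + cmod (71/311040::complex) * (cmod c1)^8 * (cmod c2)^0 + cmod (1633/648000::complex) * (cmod c1)^8 * (cmod c2)^2 + cmod (-28469/17496000::complex) * (cmod c1)^9 * (cmod c2)^0 + cmod (-136729/233280000::complex) * (cmod c1)^10 * (cmod c2)^1 + cmod (337561/2099520000::complex) * (cmod c1)^12 * (cmod c2)^0"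
    by (rule polybound1[OF b3 b4 b5 b6])
  also have "\<dots> = 1/64 * (cmod c1)^0 * (cmod c2)^0 + 1/30 * (cmod c1)^0 * (cmod c2)^0 + 1/54 * (cmod c1)^0 * (cmod c2)^0 + 1/162 * (cmod c1)^0 * (cmod c2)^0 + 1/50 * (cmod c1)^0 * (cmod c2)^1 + 1/48 * (cmod c1)^0 * (cmod c2)^1 + 1/48 * (cmod c1)^0 * (cmod c2)^1 + 1/128 * (cmod c1)^0 * (cmod c2)^2 + 1/60 * (cmod c1)^0 * (cmod c2)^2 + 1/96 * (cmod c1)^0 * (cmod c2)^3 + 11/2592 * (cmod c1)^0 * (cmod c2)^3 + 11/2304 * (cmod c1)^0 * (cmod c2)^4 + 11/4608 * (cmod c1)^0 * (cmod c2)^6 + 1/48 * (cmod c1)^1 * (cmod c2)^0 + 1/45 * (cmod c1)^1 * (cmod c2)^0 + 1/40 * (cmod c1)^1 * (cmod c2)^1 + 1/36 * (cmod c1)^1 * (cmod c2)^1 + 1/36 * (cmod c1)^1 * (cmod c2)^1 + 7/120 * (cmod c1)^1 * (cmod c2)^2 + 13/400 * (cmod c1)^1 * (cmod c2)^3 + 37/8640 * (cmod c1)^1 * (cmod c2)^4 + 1/50 * (cmod c1)^2 * (cmod c2)^0 + 1/48 * (cmod c1)^2 * (cmod c2)^0 + 31/2160 * (cmod c1)^2 * (cmod c2)^0 + 11/384 * (cmod c1)^2 * (cmod c2)^1 + 1/300 * (cmod c1)^2 * (cmod c2)^1 + 1/48 * (cmod c1)^2 * (cmod c2)^2 + 13/720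 * (cmod c1)^2 * (cmod c2)^2 + 107/5760 * (cmod c1)^2 * (cmod c2)^3 + 971/115200 * (cmod c1)^2 * (cmod c2)^5 + 1/72 * (cmod c1)^3 * (cmod c2)^0 + 5/324 * (cmod c1)^3 * (cmod c2)^0 + 49/4860 * (cmod c1)^3 * (cmod c2)^0 + 1/180 * (cmod c1)^3 * (cmod c2)^1 + 13/900 * (cmod c1)^3 * (cmod c2)^2 + 4861/194400 * (cmod c1)^3 * (cmod c2)^3 + 11/1152 * (cmod c1)^4 * (cmod c2)^0 + 49/2700 * (cmod c1)^4 * (cmod c2)^0 + 1/108 * (cmod c1)^4 * (cmod c2)^1 + 767/32400 * (cmod c1)^4 * (cmod c2)^1 + 1/768 * (cmod c1)^4 * (cmod c2)^2 + 1973/518400 * (cmod c1)^4 * (cmod c2)^4 + 11/2025 * (cmod c1)^5 * (cmod c2)^0 + 29/4500 * (cmod c1)^5 * (cmod c2)^1 + 59/4800 * (cmod c1)^5 * (cmod c2)^2 + 25/7776 * (cmod c1)^6 * (cmod c2)^0 + 413/194400 * (cmod c1)^6 * (cmod c2)^0 + 217/14400 * (cmod c1)^6 * (cmod c2)^1 + 230171/46656000 * (cmod c1)^6 * (cmod c2)^3 + 581/162000 * (cmod c1)^7 * (cmod c2)^0 + 2239/486000 * (cmod c1)^7 * (cmod c2)^1 + 71/311040 * (cmod c1)^8 * (cmod c2)^0 + 1633/648000 * (cmod c1)^8 * (cmod c2)^2 + 28469/17496000 * (cmod c1)^9 * (cmod c2)^0 + 136729/233280000 * (cmod c1)^10 *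 (cmod c2)^1 + 337561/2099520000 * (cmod c1)^12 * (cmod c2)^0"
    by (simp add: norm_divide norm_minus_cancel)
  also have "\<dots> \<le> 0.428001"
    by (rule realbound) (use b1 b2 in auto)
  finally show ?thesis .
qed

lemma coeffs_solve2:
  fixes a c e p :: "nat \<Rightarrow> complex"
  assumes e0: "e 0 = 1" and c0: "c 0 = 0" and p0: "p 0 = 0" and a0: "a 0 = 0" and a1: "a 1 = 1"
  and H1: "\<And>n. n \<ge> 1 \<Longrightarrow> (\<Sum>i=0..n. e i * e (n-i)) = 2 * (\<Sum>i=0..n. c i * e (n-i))"
  and H2: "\<And>n. of_nat (n+1) * e (n+1) = (\<Sum>i=0..n. e i * (of_nat (n-i+1) * p (n-i+1)))"
  and H3: "\<And>n. n \<ge> 1 \<Longrightarrow> of_nat n * a n = (\<Sum>i=0..n. a i * ((if n - i = 0 then 1 else 0) + p (n-i)))"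
  shows "a 2 = c 1 \<and> a 3 = (1/2) * c 2 + (1/2) * (c 1)^2 \<and> a 4 = (1/3) * c 3 + (1/2) * c 1 * c 2 + (1/9) * (c 1)^3 \<and> a 5 = (1/4) * c 4 + (1/8) * (c 2)^2 + (1/3) * c 1 * c 3 + (1/8) * (c 1)^2 * c 2 - (1/72) * (c 1)^4 \<and> a 6 = (1/5) * c 5 + (1/6) * c 2 * c 3 + (1/4) * c 1 * c 4 + (1/40) * c 1 * (c 2)^2 + (1/15) * (c 1)^2 * c 3 - (5/72) * (c 1)^3 * c 2 - (1/225) * (c 1)^5 \<and> a 7 = (1/6) * c 6 + (1/18) * (c 3)^2 + (1/8) * c 2 * c 4 - (1/144) * (c 2)^3 + (1/5) * c 1 * c 5 + (1/24) * (c 1)^2 * c 4 - (1/10) * (c 1)^2 * (c 2)^2 - (17/270) * (c 1)^3 * c 3 - (1/144) * (c 1)^4 * c 2 + (281/32400) * (c 1)^6"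
proof (rule coeffs_solve[where e=e and c=c and p=p and a=a, OF e0 c0 p0 a0 a1])
  note ex = sum.atLeast0_atMost_Suc eval_nat_numeral
  show "e 0 * e 1 + e 1 * e 0 = 2 * (c 0 * e 1 + c 1 * e 0)" using H1[of 1] by (simp add: ex; algebra)
  show "e 0 * e 2 + e 1 * e 1 + e 2 * e 0 = 2 * (c 0 * e 2 + c 1 * e 1 + c 2 * e 0)" using H1[of 2] by (simp add: ex; algebra)
  show "e 0 * e 3 + e 1 * e 2 + e 2 * e 1 + e 3 * e 0 = 2 * (c 0 * e 3 + c 1 * e 2 + c 2 * e 1 + c 3 * e 0)" using H1[of 3] by (simp add: ex; algebra)
  show "e 0 * e 4 + e 1 * e 3 + e 2 * e 2 + e 3 * e 1 + e 4 * e 0 = 2 * (c 0 * e 4 + c 1 * e 3 + c 2 * e 2 + c 3 * e 1 + c 4 * e 0)" using H1[of 4] by (simp add: ex; algebra)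
  show "e 0 * e 5 + e 1 * e 4 + e 2 * e 3 + e 3 * e 2 + e 4 * e 1 + e 5 * e 0 = 2 * (c 0 * e 5 + c 1 * e 4 + c 2 * e 3 + c 3 * e 2 + c 4 * e 1 + c 5 * e 0)" using H1[of 5] by (simp add: ex; algebra)
  show "e 0 * e 6 + e 1 * e 5 + e 2 * e 4 + e 3 * e 3 + e 4 * e 2 + e 5 * e 1 + e 6 * e 0 = 2 * (c 0 * e 6 + c 1 * e 5 + c 2 * e 4 + c 3 * e 3 + c 4 * e 2 + c 5 * e 1 + c 6 * e 0)" using H1[of 6] by (simp add: ex; algebra)
  show "1 * e 1 = e 0 * (1 * p 1)" using H2[of 0] by (simp add: ex; algebra)
  show "2 * e 2 = e 0 * (2 * p 2) + e 1 * (1 * p 1)" using H2[of 1] by (simp add: ex; algebra)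
  show "3 * e 3 = e 0 * (3 * p 3) + e 1 * (2 * p 2) + e 2 * (1 * p 1)" using H2[of 2] by (simp add: ex; algebra)
  show "4 * e 4 = e 0 * (4 * p 4) + e 1 * (3 * p 3) + e 2 * (2 * p 2) + e 3 * (1 * p 1)" using H2[of 3] by (simp add: ex; algebra)
  show "5 * e 5 = e 0 * (5 * p 5) + e 1 * (4 * p 4) + e 2 * (3 * p 3) + e 3 * (2 * p 2) + e 4 * (1 * p 1)" using H2[of 4] by (simp add: ex; algebra)
  show "6 * e 6 = e 0 * (6 * p 6) + e 1 * (5 * p 5) + e 2 * (4 * p 4) + e 3 * (3 * p 3) + e 4 * (2 * p 2) + e 5 * (1 * p 1)" using H2[of 5] by (simp add: ex; algebra)
  show "2 * a 2 = a 0 * (0 + p 2) + a 1 * (0 + p 1) + a 2 * (1 + p 0)" using H3[of 2] by (simp add: ex; algebra)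
  show "3 * a 3 = a 0 * (0 + p 3) + a 1 * (0 + p 2) + a 2 * (0 + p 1) + a 3 * (1 + p 0)" using H3[of 3] by (simp add: ex; algebra)
  show "4 * a 4 = a 0 * (0 + p 4) + a 1 * (0 + p 3) + a 2 * (0 + p 2) + a 3 * (0 + p 1) + a 4 * (1 + p 0)" using H3[of 4] by (simp add: ex; algebra)
  show "5 * a 5 = a 0 * (0 + p 5) + a 1 * (0 + p 4) + a 2 * (0 + p 3) + a 3 * (0 + p 2) + a 4 * (0 + p 1) + a 5 * (1 + p 0)" using H3[of 5] by (simp add: ex; algebra)
  show "6 * a 6 = a 0 * (0 + p 6) + a 1 * (0 + p 5) + a 2 * (0 + p 4) + a 3 * (0 + p 3) + a 4 * (0 + p 2) + a 5 * (0 + p 1) + a 6 * (1 + p 0)" using H3[of 6] by (simp add: ex; algebra)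
  show "7 * a 7 = a 0 * (0 + p 7) + a 1 * (0 + p 6) + a 2 * (0 + p 5) + a 3 * (0 + p 4) + a 4 * (0 + p 3) + a 5 * (0 + p 2) + a 6 * (0 + p 1) + a 7 * (1 + p 0)" using H3[of 7] by (simp add: ex; algebra)
qed

lemma taylor_F: "taylor_coeff f n = fps_nth (fps_expansion f 0) n"
  by (simp add: taylor_coeff_def fps_expansion_def)

lemma hankel_F: "hankel41 f = 1 * fps_nth (fps_expansion f 0) 3 * fps_nth (fps_expansion f 0) 5 * fps_nth (fps_expansion f 0) 7 - 1 * fps_nth (fps_expansion f 0) 3 * fps_nth (fps_expansion f 0) 6 * fps_nth (fps_expansion f 0) 6 - 1 * fps_nth (fps_expansion f 0) 4 * fps_nth (fps_expansion f 0) 4 * fps_nth (fps_expansion f 0) 7 + 1 * fps_nth (fps_expansion f 0) 4 * fps_nth (fps_expansion f 0) 6 * fps_nth (fps_expansion f 0) 5 + 1 * fps_nth (fps_expansion f 0) 5 * fps_nth (fps_expansion f 0) 4 * fps_nth (fps_expansion f 0) 6 - 1 * fps_nth (fps_expansion f 0) 5 * fps_nth (fps_expansion f 0) 5 * fps_nth (fps_expansion f 0) 5 - fps_nth (fps_expansion f 0) 2 * fps_nth (fps_expansion f 0) 2 * fps_nth (fps_expansion f 0) 5 * fps_nth (fps_expansion f 0) 7 + fps_nth (fps_expansion f 0) 2 * fps_nth (fps_expansion f 0) 2 * fps_nth (fps_expansion f 0) 6 * fps_nth (fps_expansion f 0) 6 + fps_nth (fps_expansion f 0) 2 * fps_nth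 (fps_expansion f 0) 4 * fps_nth (fps_expansion f 0) 3 * fps_nth (fps_expansion f 0) 7 - fps_nth (fps_expansion f 0) 2 * fps_nth (fps_expansion f 0) 4 * fps_nth (fps_expansion f 0) 6 * fps_nth (fps_expansion f 0) 4 - fps_nth (fps_expansion f 0) 2 * fps_nth (fps_expansion f 0) 5 * fps_nth (fps_expansion f 0) 3 * fps_nth (fps_expansion f 0) 6 + fps_nth (fps_expansion f 0) 2 * fps_nth (fps_expansion f 0) 5 * fps_nth (fps_expansion f 0) 5 * fps_nth (fps_expansion f 0) 4 + fps_nth (fps_expansion f 0) 3 * fps_nth (fps_expansion f 0) 2 * fps_nth (fps_expansion f 0) 4 * fps_nth (fps_expansion f 0) 7 - fps_nth (fps_expansion f 0) 3 * fps_nth (fps_expansion f 0) 2 * fps_nth (fps_expansion f 0) 6 * fps_nth (fps_expansion f 0) 5 - fps_nth (fps_expansion f 0) 3 * fps_nth (fps_expansion f 0) 3 * fps_nth (fps_expansion f 0) 3 * fps_nth (fps_expansion f 0) 7 + fps_nth (fps_expansion f 0) 3 * fps_nth (fps_expansion f 0) 3 * fps_nth (fps_expansion f 0) 6 * fps_nth (fps_expansion f 0) 4 + fps_nth (fps_expansion f 0) 3 * fps_nth (fps_expansion f 0) 5 * fps_nth (fps_expansion f 0) 3 * fps_nth (fps_expansion f 0) 5 - fps_nth (fps_expansion f 0) 3 * fps_nth (fps_expansion f 0) 5 * fps_nth (fps_expansion f 0) 4 * fps_nth (fps_expansion f 0) 4 - fps_nth (fps_expansion f 0) 4 * fps_nth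 (fps_expansion f 0) 2 * fps_nth (fps_expansion f 0) 4 * fps_nth (fps_expansion f 0) 6 + fps_nth (fps_expansion f 0) 4 * fps_nth (fps_expansion f 0) 2 * fps_nth (fps_expansion f 0) 5 * fps_nth (fps_expansion f 0) 5 + fps_nth (fps_expansion f 0) 4 * fps_nth (fps_expansion f 0) 3 * fps_nth (fps_expansion f 0) 3 * fps_nth (fps_expansion f 0) 6 - fps_nth (fps_expansion f 0) 4 * fps_nth (fps_expansion f 0) 3 * fps_nth (fps_expansion f 0) 5 * fps_nth (fps_expansion f 0) 4 - fps_nth (fps_expansion f 0) 4 * fps_nth (fps_expansion f 0) 4 * fps_nth (fps_expansion f 0) 3 * fps_nth (fps_expansion f 0) 5 + fps_nth (fps_expansion f 0) 4 * fps_nth (fps_expansion f 0) 4 * fps_nth (fps_expansion f 0) 4 * fps_nth (fps_expansion f 0) 4"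
  unfolding hankel41_def Let_def perm4 taylor_F
  by (simp add: numeral_eq_Suc)

theorem theorem3p2:
  assumes "f \<in> S_star_rho"
  shows "cmod (hankel41 f) \<le> 0.428001"
proof -
  have holf: "f holomorphic_on ball 0 1" and injf: "inj_on f (ball 0 1)" and f0: "f 0 = 0"
    and df0: "deriv f 0 = 1"
    and sub: "subordinate (\<lambda>z. if z = 0 then 1 else z * deriv f z / f z) (\<lambda>z. 1 + arsinh z)"
    using assms unfolding S_star_rho_def by auto
  obtain w where holw: "w holomorphic_on ball 0 1" and wb: "w ` ball 0 1 \<subseteq> ball 0 1"
    and w0: "w 0 = 0" and wsub: "\<And>z. z \<in> ball 0 1 \<Longrightarrow> (if z = 0 then 1 else z * deriv f z / f z) = 1 + arsinh (w z)"
    using sub unfolding subordinate_def by blast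
  define p where "p = (\<lambda>z. arsinh (w z))"
  have holp: "p holomorphic_on ball 0 1" unfolding p_def
    by (rule holomorphic_on_compose_gen[OF holw arsinh_holo wb, unfolded o_def])
  define F where "F = fps_expansion f 0"
  define W where "W = fps_expansion w 0"
  define P where "P = fps_expansion p 0"
  define E where "E = fps_compose (fps_exp 1) P"
  have Fexp: "f has_fps_expansion F" unfolding F_def
    by (rule has_fps_expansion_fps_expansion[OF _ _ holf]) auto
  have Wexp: "w has_fps_expansion W" unfolding W_def
    by (rule has_fps_expansion_fps_expansion[OF _ _ holw]) auto
  have Pexp: "p has_fps_expansion P" unfolding P_def
    by (rule has_fps_expansion_fps_expansion[OF _ _ holp]) auto
  have P0: "fps_nth P 0 = 0" using fps_nth_fps_expansion[OF Pexp, of 0] by (simp add: p_def w0)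
  have W0: "fps_nth W 0 = 0" using fps_nth_fps_expansion[OF Wexp, of 0] by (simp add: w0)
  have F0: "fps_nth F 0 = 0" using fps_nth_fps_expansion[OF Fexp, of 0] by (simp add: f0)
  have F1: "fps_nth F 1 = 1" using fps_nth_fps_expansion[OF Fexp, of 1] by (simp add: df0)
  have E0: "fps_nth E 0 = 1" unfolding E_def by (simp add: P0)
  have Eexp: "(\<lambda>z. exp (p z)) has_fps_expansion E"
  proof -
    have "((\<lambda>x. exp (1 * x)) \<circ> p) has_fps_expansion E"
      unfolding E_def by (rule has_fps_expansion_compose[OF has_fps_expansion_exp Pexp P0])
    thus ?thesis by (simp add: o_def)
  qed
  have ev1: "eventually (\<lambda>z. z \<in> ball (0::complex) 1) (nhds 0)"
    by (rule eventually_nhds_in_open) auto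
  have R1: "E * E = fps_const 2 * (W * E) + 1"
  proof (rule fps_expansion_unique)
    show "(\<lambda>z. exp (p z) * exp (p z)) has_fps_expansion E * E"
      by (intro has_fps_expansion_mult Eexp)
    have "(\<lambda>z. 2 * (w z * exp (p z)) + 1) has_fps_expansion fps_const 2 * (W * E) + fps_const 1"
      by (intro has_fps_expansion_add has_fps_expansion_cmult_left has_fps_expansion_mult Wexp Eexp
                has_fps_expansion_const)
    thus "(\<lambda>z. 2 * (w z * exp (p z)) + 1) has_fps_expansion fps_const 2 * (W * E) + 1" by simp
    show "eventually (\<lambda>z. exp (p z) * exp (p z) = 2 * (w z * exp (p z)) + 1) (nhds 0)"
      by (simp add: p_def arsinh_rel)
  qed
  have R2: "fps_deriv E = E * fps_deriv P"
    unfolding E_def using fps_compose_deriv[OF P0, of "fps_exp 1"] by simp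
  have R3: "fps_X * fps_deriv F = F * (1 + P)"
  proof (rule fps_expansion_unique)
    show "(\<lambda>z. z * deriv f z) has_fps_expansion fps_X * fps_deriv F"
      by (intro has_fps_expansion_mult has_fps_expansion_fps_X has_fps_expansion_deriv Fexp)
    have "(\<lambda>z. f z * (1 + p z)) has_fps_expansion F * (fps_const 1 + P)"
      by (intro has_fps_expansion_mult has_fps_expansion_add Fexp Pexp has_fps_expansion_const)
    thus "(\<lambda>z. f z * (1 + p z)) has_fps_expansion F * (1 + P)" by simp
    show "eventually (\<lambda>z. z * deriv f z = f z * (1 + p z)) (nhds 0)"
      using ev1
    proof eventually_elim
      case (elim z)
      show ?case
      proof (cases "z = 0")
        case True thus ?thesis by (simp add: f0)
      next
        case False
        have "f z \<noteq> 0"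
        proof
          assume "f z = 0"
          hence "f z = f 0" by (simp add: f0)
          hence "z = 0" using injf elim by (auto dest: inj_onD)
          thus False using False by simp
        qed
        moreover have "z * deriv f z / f z = 1 + p z" using wsub[OF elim] False by (simp add: p_def)
        ultimately show ?thesis by (simp add: field_simps)
      qed
    qed
  qed
  define a where "a = (\<lambda>n. fps_nth F n)"
  define c where "c = (\<lambda>n. fps_nth W n)"
  define e where "e = (\<lambda>n. fps_nth E n)"
  define q where "q = (\<lambda>n. fps_nth P n)"
  have co: "a 2 = c 1 \<and> a 3 = (1/2) * c 2 + (1/2) * (c 1)^2 \<and> a 4 = (1/3) * c 3 + (1/2) * c 1 * c 2 + (1/9) * (c 1)^3 \<and> a 5 = (1/4) * c 4 + (1/8) * (c 2)^2 + (1/3) * c 1 * c 3 + (1/8) * (c 1)^2 * c 2 - (1/72) * (c 1)^4 \<and> a 6 = (1/5) * c 5 + (1/6) * c 2 * c 3 + (1/4) * c 1 * c 4 + (1/40) * c 1 * (c 2)^2 + (1/15) * (c 1)^2 * c 3 - (5/72) * (c 1)^3 * c 2 - (1/225) * (c 1)^5 \<and> a 7 = (1/6) * c 6 + (1/18) * (c 3)^2 + (1/8) * c 2 * c 4 - (1/144) * (c 2)^3 + (1/5) * c 1 * c 5 + (1/24) * (c 1)^2 * c 4 - (1/10) * (c 1)^2 * (c 2)^2 - (17/270) * (c 1)^3 * c 3 - (1/144) * (c 1)^4 * c 2 + (281/32400) * (c 1)^6"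
  proof (rule coeffs_solve2)
    show "e 0 = 1" "c 0 = 0" "q 0 = 0" "a 0 = 0" "a 1 = 1"
      using E0 W0 P0 F0 F1 by (simp_all add: a_def c_def e_def q_def)
    show "(\<Sum>i=0..n. e i * e (n-i)) = 2 * (\<Sum>i=0..n. c i * e (n-i))" if "n \<ge> 1" for n
      using arg_cong[OF R1, of "\<lambda>X. fps_nth X n"] that
      by (simp only: fps_mult_left_const_nth fps_add_nth fps_one_nth)
         (simp add: fps_mult_nth e_def c_def sum_distrib_left)
    show "of_nat (n+1) * e (n+1) = (\<Sum>i=0..n. e i * (of_nat (n-i+1) * q (n-i+1)))" for n
      using arg_cong[OF R2, of "\<lambda>X. fps_nth X n"]
      by (simp add: fps_mult_nth e_def q_def algebra_simps)
    show "of_nat n * a n = (\<Sum>i=0..n. a i * ((if n - i = 0 then 1 else 0) + q (n-i)))" if "n \<ge> 1" for n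
    proof -
      have "fps_nth (fps_X * fps_deriv F) n = fps_nth (F * (1 + P)) n" using R3 by simp
      moreover have "fps_nth (fps_X * fps_deriv F) n = of_nat n * a n"
        using that by (simp add: fps_X_mult_nth a_def)
      ultimately show ?thesis by (simp add: fps_mult_nth a_def q_def)
    qed
  qed
  have cb: "cmod (c n) \<le> 1" if "n > 0" for n
    using coeff_le1[OF holw wb that] fps_nth_fps_expansion[OF Wexp, of n] by (simp add: c_def)
  have c2b: "cmod (c 2) \<le> 1 - (cmod (c 1))^2"
    using schwarz_pick_coeff[OF holw wb w0] by (simp add: c_def W_def)
  have "hankel41 f = 1 * a 3 * a 5 * a 7 - 1 * a 3 * a 6 * a 6 - 1 * a 4 * a 4 * a 7 + 1 * a 4 * a 6 * a 5 + 1 * a 5 * a 4 * a 6 - 1 * a 5 * a 5 * a 5 - a 2 * a 2 * a 5 * a 7 + a 2 * a 2 * a 6 * a 6 + a 2 * a 4 * a 3 * a 7 - a 2 * a 4 * a 6 * a 4 - a 2 * a 5 * a 3 * a 6 + a 2 * a 5 * a 5 * a 4 + a 3 * a 2 * a 4 * a 7 - a 3 * a 2 * a 6 * a 5 - a 3 * a 3 * a 3 * a 7 + a 3 * a 3 * a 6 * a 4 + a 3 * a 5 * a 3 * a 5 - a 3 * a 5 * a 4 * a 4 - a 4 * a 2 * a 4 * a 6 + a 4 * a 2 * a 5 * a 5 + a 4 * a 3 * a 3 * a 6 - a 4 * a 3 * a 5 * a 4 - a 4 * a 4 * a 3 * a 5 + a 4 * a 4 * a 4 * a 4"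
    unfolding hankel_F F_def[symmetric] a_def by simp
  also have "\<dots> = (-1/64) * (c 1)^0 * (c 2)^0 * (c 3)^0 * (c 4)^3 * (c 5)^0 * (c 6)^0 + (1/30) * (c 1)^0 * (c 2)^0 * (c 3)^1 * (c 4)^1 * (c 5)^1 * (c 6)^0 + (-1/54) * (c 1)^0 * (c 2)^0 * (c 3)^2 * (c 4)^0 * (c 5)^0 * (c 6)^1 + (1/162) * (c 1)^0 * (c 2)^0 * (c 3)^4 * (c 4)^0 * (c 5)^0 * (c 6)^0 + (-1/50) * (c 1)^0 * (c 2)^1 * (c 3)^0 * (c 4)^0 * (c 5)^2 * (c 6)^0 + (1/48) * (c 1)^0 * (c 2)^1 * (c 3)^0 * (c 4)^1 * (c 5)^0 * (c 6)^1 + (-1/48) * (c 1)^0 * (c 2)^1 * (c 3)^2 * (c 4)^1 * (c 5)^0 * (c 6)^0 + (1/128) * (c 1)^0 * (c 2)^2 * (c 3)^0 * (c 4)^2 * (c 5)^0 * (c 6)^0 + (1/60) * (c 1)^0 * (c 2)^2 * (c 3)^1 * (c 4)^0 * (c 5)^1 * (c 6)^0 + (-1/96) * (c 1)^0 * (c 2)^3 * (c 3)^0 * (c 4)^0 * (c 5)^0 * (c 6)^1 + (11/2592) * (c 1)^0 * (c 2)^3 * (c 3)^2 * (c 4)^0 * (c 5)^0 * (c 6)^0 + (-11/2304) * (c 1)^0 * (c 2)^4 * (c 3)^0 * (c 4)^1 * (c 5)^0 * (c 6)^0 + (11/4608) * (c 1)^0 * (c 2)^6 * (c 3)^0 * (c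 4)^0 * (c 5)^0 * (c 6)^0 + (1/48) * (c 1)^1 * (c 2)^0 * (c 3)^1 * (c 4)^2 * (c 5)^0 * (c 6)^0 + (-1/45) * (c 1)^1 * (c 2)^0 * (c 3)^2 * (c 4)^0 * (c 5)^1 * (c 6)^0 + (-1/40) * (c 1)^1 * (c 2)^1 * (c 3)^0 * (c 4)^1 * (c 5)^1 * (c 6)^0 + (1/36) * (c 1)^1 * (c 2)^1 * (c 3)^1 * (c 4)^0 * (c 5)^0 * (c 6)^1 + (1/36) * (c 1)^1 * (c 2)^1 * (c 3)^3 * (c 4)^0 * (c 5)^0 * (c 6)^0 + (-7/120) * (c 1)^1 * (c 2)^2 * (c 3)^1 * (c 4)^1 * (c 5)^0 * (c 6)^0 + (13/400) * (c 1)^1 * (c 2)^3 * (c 3)^0 * (c 4)^0 * (c 5)^1 * (c 6)^0 + (-37/8640) * (c 1)^1 * (c 2)^4 * (c 3)^1 * (c 4)^0 * (c 5)^0 * (c 6)^0 + (1/50) * (c 1)^2 * (c 2)^0 * (c 3)^0 * (c 4)^0 * (c 5)^2 * (c 6)^0 + (-1/48) * (c 1)^2 * (c 2)^0 * (c 3)^0 * (c 4)^1 * (c 5)^0 * (c 6)^1 + (-31/2160) * (c 1)^2 * (c 2)^0 * (c 3)^2 * (c 4)^1 * (c 5)^0 * (c 6)^0 + (11/384) * (c 1)^2 * (c 2)^1 * (c 3)^0 * (c 4)^2 * (c 5)^0 * (c 6)^0 + (1/300) * (c 1)^2 * (c 2)^1 * (c 3)^1 * (c 4)^0 * (c 5)^1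 * (c 6)^0 + (-1/48) * (c 1)^2 * (c 2)^2 * (c 3)^0 * (c 4)^0 * (c 5)^0 * (c 6)^1 + (-13/720) * (c 1)^2 * (c 2)^2 * (c 3)^2 * (c 4)^0 * (c 5)^0 * (c 6)^0 + (107/5760) * (c 1)^2 * (c 2)^3 * (c 3)^0 * (c 4)^1 * (c 5)^0 * (c 6)^0 + (-971/115200) * (c 1)^2 * (c 2)^5 * (c 3)^0 * (c 4)^0 * (c 5)^0 * (c 6)^0 + (-1/72) * (c 1)^3 * (c 2)^0 * (c 3)^0 * (c 4)^1 * (c 5)^1 * (c 6)^0 + (5/324) * (c 1)^3 * (c 2)^0 * (c 3)^1 * (c 4)^0 * (c 5)^0 * (c 6)^1 + (49/4860) * (c 1)^3 * (c 2)^0 * (c 3)^3 * (c 4)^0 * (c 5)^0 * (c 6)^0 + (1/180) * (c 1)^3 * (c 2)^1 * (c 3)^1 * (c 4)^1 * (c 5)^0 * (c 6)^0 + (-13/900) * (c 1)^3 * (c 2)^2 * (c 3)^0 * (c 4)^0 * (c 5)^1 * (c 6)^0 + (4861/194400) * (c 1)^3 * (c 2)^3 * (c 3)^1 * (c 4)^0 * (c 5)^0 * (c 6)^0 + (11/1152) * (c 1)^4 * (c 2)^0 * (c 3)^0 * (c 4)^2 * (c 5)^0 * (c 6)^0 + (-49/2700) * (c 1)^4 * (c 2)^0 * (c 3)^1 * (c 4)^0 * (c 5)^1 * (c 6)^0 + (1/108) * (c 1)^4 * (c 2)^1 * (c 3)^0 * (c 4)^0 * (c 5)^0 * (c 6)^1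 + (-767/32400) * (c 1)^4 * (c 2)^1 * (c 3)^2 * (c 4)^0 * (c 5)^0 * (c 6)^0 + (-1/768) * (c 1)^4 * (c 2)^2 * (c 3)^0 * (c 4)^1 * (c 5)^0 * (c 6)^0 + (-1973/518400) * (c 1)^4 * (c 2)^4 * (c 3)^0 * (c 4)^0 * (c 5)^0 * (c 6)^0 + (11/2025) * (c 1)^5 * (c 2)^0 * (c 3)^1 * (c 4)^1 * (c 5)^0 * (c 6)^0 + (29/4500) * (c 1)^5 * (c 2)^1 * (c 3)^0 * (c 4)^0 * (c 5)^1 * (c 6)^0 + (59/4800) * (c 1)^5 * (c 2)^2 * (c 3)^1 * (c 4)^0 * (c 5)^0 * (c 6)^0 + (-25/7776) * (c 1)^6 * (c 2)^0 * (c 3)^0 * (c 4)^0 * (c 5)^0 * (c 6)^1 + (413/194400) * (c 1)^6 * (c 2)^0 * (c 3)^2 * (c 4)^0 * (c 5)^0 * (c 6)^0 + (-217/14400) * (c 1)^6 * (c 2)^1 * (c 3)^0 * (c 4)^1 * (c 5)^0 * (c 6)^0 + (-230171/46656000) * (c 1)^6 * (c 2)^3 * (c 3)^0 * (c 4)^0 * (c 5)^0 * (c 6)^0 + (581/162000) * (c 1)^7 * (c 2)^0 * (c 3)^0 * (c 4)^0 * (c 5)^1 * (c 6)^0 + (2239/486000) * (c 1)^7 * (c 2)^1 * (c 3)^1 * (c 4)^0 * (c 5)^0 * (c 6)^0 + (71/311040) * (c 1)^8 * (c 2)^0 * (c 3)^0 * (c 4)^1 * (c 5)^0 * (c 6)^0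 + (1633/648000) * (c 1)^8 * (c 2)^2 * (c 3)^0 * (c 4)^0 * (c 5)^0 * (c 6)^0 + (-28469/17496000) * (c 1)^9 * (c 2)^0 * (c 3)^1 * (c 4)^0 * (c 5)^0 * (c 6)^0 + (-136729/233280000) * (c 1)^10 * (c 2)^1 * (c 3)^0 * (c 4)^0 * (c 5)^0 * (c 6)^0 + (337561/2099520000) * (c 1)^12 * (c 2)^0 * (c 3)^0 * (c 4)^0 * (c 5)^0 * (c 6)^0"
    by (rule Hid) (use co in auto)
  finally have "hankel41 f = (-1/64) * (c 1)^0 * (c 2)^0 * (c 3)^0 * (c 4)^3 * (c 5)^0 * (c 6)^0 + (1/30) * (c 1)^0 * (c 2)^0 * (c 3)^1 * (c 4)^1 * (c 5)^1 * (c 6)^0 + (-1/54) * (c 1)^0 * (c 2)^0 * (c 3)^2 * (c 4)^0 * (c 5)^0 * (c 6)^1 + (1/162) * (c 1)^0 * (c 2)^0 * (c 3)^4 * (c 4)^0 * (c 5)^0 * (c 6)^0 + (-1/50) * (c 1)^0 * (c 2)^1 * (c 3)^0 * (c 4)^0 * (c 5)^2 * (c 6)^0 + (1/48) * (c 1)^0 * (c 2)^1 * (c 3)^0 * (c 4)^1 * (c 5)^0 * (c 6)^1 + (-1/48) * (c 1)^0 * (c 2)^1 * (c 3)^2 * (c 4)^1 * (c 5)^0 * (c 6)^0 + (1/128) * (c 1)^0 * (c 2)^2 * (c 3)^0 * (c 4)^2 * (c 5)^0 * (c 6)^0 + (1/60) * (c 1)^0 * (c 2)^2 * (c 3)^1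 * (c 4)^0 * (c 5)^1 * (c 6)^0 + (-1/96) * (c 1)^0 * (c 2)^3 * (c 3)^0 * (c 4)^0 * (c 5)^0 * (c 6)^1 + (11/2592) * (c 1)^0 * (c 2)^3 * (c 3)^2 * (c 4)^0 * (c 5)^0 * (c 6)^0 + (-11/2304) * (c 1)^0 * (c 2)^4 * (c 3)^0 * (c 4)^1 * (c 5)^0 * (c 6)^0 + (11/4608) * (c 1)^0 * (c 2)^6 * (c 3)^0 * (c 4)^0 * (c 5)^0 * (c 6)^0 + (1/48) * (c 1)^1 * (c 2)^0 * (c 3)^1 * (c 4)^2 * (c 5)^0 * (c 6)^0 + (-1/45) * (c 1)^1 * (c 2)^0 * (c 3)^2 * (c 4)^0 * (c 5)^1 * (c 6)^0 + (-1/40) * (c 1)^1 * (c 2)^1 * (c 3)^0 * (c 4)^1 * (c 5)^1 * (c 6)^0 + (1/36) * (c 1)^1 * (c 2)^1 * (c 3)^1 * (c 4)^0 * (c 5)^0 * (c 6)^1 + (1/36) * (c 1)^1 * (c 2)^1 * (c 3)^3 * (c 4)^0 * (c 5)^0 * (c 6)^0 + (-7/120) * (c 1)^1 * (c 2)^2 * (c 3)^1 * (c 4)^1 * (c 5)^0 * (c 6)^0 + (13/400) * (c 1)^1 * (c 2)^3 * (c 3)^0 * (c 4)^0 * (c 5)^1 * (c 6)^0 + (-37/8640) * (c 1)^1 * (c 2)^4 * (c 3)^1 * (c 4)^0 * (c 5)^0 * (c 6)^0 + (1/50) * (c 1)^2 * (c 2)^0 * (c 3)^0 * (c 4)^0 *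 (c 5)^2 * (c 6)^0 + (-1/48) * (c 1)^2 * (c 2)^0 * (c 3)^0 * (c 4)^1 * (c 5)^0 * (c 6)^1 + (-31/2160) * (c 1)^2 * (c 2)^0 * (c 3)^2 * (c 4)^1 * (c 5)^0 * (c 6)^0 + (11/384) * (c 1)^2 * (c 2)^1 * (c 3)^0 * (c 4)^2 * (c 5)^0 * (c 6)^0 + (1/300) * (c 1)^2 * (c 2)^1 * (c 3)^1 * (c 4)^0 * (c 5)^1 * (c 6)^0 + (-1/48) * (c 1)^2 * (c 2)^2 * (c 3)^0 * (c 4)^0 * (c 5)^0 * (c 6)^1 + (-13/720) * (c 1)^2 * (c 2)^2 * (c 3)^2 * (c 4)^0 * (c 5)^0 * (c 6)^0 + (107/5760) * (c 1)^2 * (c 2)^3 * (c 3)^0 * (c 4)^1 * (c 5)^0 * (c 6)^0 + (-971/115200) * (c 1)^2 * (c 2)^5 * (c 3)^0 * (c 4)^0 * (c 5)^0 * (c 6)^0 + (-1/72) * (c 1)^3 * (c 2)^0 * (c 3)^0 * (c 4)^1 * (c 5)^1 * (c 6)^0 + (5/324) * (c 1)^3 * (c 2)^0 * (c 3)^1 * (c 4)^0 * (c 5)^0 * (c 6)^1 + (49/4860) * (c 1)^3 * (c 2)^0 * (c 3)^3 * (c 4)^0 * (c 5)^0 * (c 6)^0 + (1/180) * (c 1)^3 * (c 2)^1 * (c 3)^1 * (c 4)^1 * (c 5)^0 * (c 6)^0 + (-13/900) * (c 1)^3 * (c 2)^2 * (c 3)^0 * (c 4)^0 * (c 5)^1 *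 (c 6)^0 + (4861/194400) * (c 1)^3 * (c 2)^3 * (c 3)^1 * (c 4)^0 * (c 5)^0 * (c 6)^0 + (11/1152) * (c 1)^4 * (c 2)^0 * (c 3)^0 * (c 4)^2 * (c 5)^0 * (c 6)^0 + (-49/2700) * (c 1)^4 * (c 2)^0 * (c 3)^1 * (c 4)^0 * (c 5)^1 * (c 6)^0 + (1/108) * (c 1)^4 * (c 2)^1 * (c 3)^0 * (c 4)^0 * (c 5)^0 * (c 6)^1 + (-767/32400) * (c 1)^4 * (c 2)^1 * (c 3)^2 * (c 4)^0 * (c 5)^0 * (c 6)^0 + (-1/768) * (c 1)^4 * (c 2)^2 * (c 3)^0 * (c 4)^1 * (c 5)^0 * (c 6)^0 + (-1973/518400) * (c 1)^4 * (c 2)^4 * (c 3)^0 * (c 4)^0 * (c 5)^0 * (c 6)^0 + (11/2025) * (c 1)^5 * (c 2)^0 * (c 3)^1 * (c 4)^1 * (c 5)^0 * (c 6)^0 + (29/4500) * (c 1)^5 * (c 2)^1 * (c 3)^0 * (c 4)^0 * (c 5)^1 * (c 6)^0 + (59/4800) * (c 1)^5 * (c 2)^2 * (c 3)^1 * (c 4)^0 * (c 5)^0 * (c 6)^0 + (-25/7776) * (c 1)^6 * (c 2)^0 * (c 3)^0 * (c 4)^0 * (c 5)^0 * (c 6)^1 + (413/194400) * (c 1)^6 * (c 2)^0 * (c 3)^2 * (c 4)^0 * (c 5)^0 * (c 6)^0 + (-217/14400) * (c 1)^6 * (c 2)^1 * (c 3)^0 * (c 4)^1 * (c 5)^0 *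 (c 6)^0 + (-230171/46656000) * (c 1)^6 * (c 2)^3 * (c 3)^0 * (c 4)^0 * (c 5)^0 * (c 6)^0 + (581/162000) * (c 1)^7 * (c 2)^0 * (c 3)^0 * (c 4)^0 * (c 5)^1 * (c 6)^0 + (2239/486000) * (c 1)^7 * (c 2)^1 * (c 3)^1 * (c 4)^0 * (c 5)^0 * (c 6)^0 + (71/311040) * (c 1)^8 * (c 2)^0 * (c 3)^0 * (c 4)^1 * (c 5)^0 * (c 6)^0 + (1633/648000) * (c 1)^8 * (c 2)^2 * (c 3)^0 * (c 4)^0 * (c 5)^0 * (c 6)^0 + (-28469/17496000) * (c 1)^9 * (c 2)^0 * (c 3)^1 * (c 4)^0 * (c 5)^0 * (c 6)^0 + (-136729/233280000) * (c 1)^10 * (c 2)^1 * (c 3)^0 * (c 4)^0 * (c 5)^0 * (c 6)^0 + (337561/2099520000) * (c 1)^12 * (c 2)^0 * (c 3)^0 * (c 4)^0 * (c 5)^0 * (c 6)^0" .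
  moreover have "cmod ((-1/64) * (c 1)^0 * (c 2)^0 * (c 3)^0 * (c 4)^3 * (c 5)^0 * (c 6)^0 + (1/30) * (c 1)^0 * (c 2)^0 * (c 3)^1 * (c 4)^1 * (c 5)^1 * (c 6)^0 + (-1/54) * (c 1)^0 * (c 2)^0 * (c 3)^2 * (c 4)^0 * (c 5)^0 * (c 6)^1 + (1/162) * (c 1)^0 * (c 2)^0 * (c 3)^4 * (c 4)^0 * (c 5)^0 * (c 6)^0 + (-1/50) * (c 1)^0 * (c 2)^1 * (c 3)^0 * (c 4)^0 * (c 5)^2 * (c 6)^0 + (1/48) * (c 1)^0 * (c 2)^1 * (c 3)^0 * (c 4)^1 * (c 5)^0 * (c 6)^1 + (-1/48) * (c 1)^0 * (c 2)^1 * (c 3)^2 * (c 4)^1 * (c 5)^0 * (c 6)^0 + (1/128) * (c 1)^0 * (c 2)^2 * (c 3)^0 * (c 4)^2 * (c 5)^0 * (c 6)^0 + (1/60) * (c 1)^0 * (c 2)^2 * (c 3)^1 * (c 4)^0 * (c 5)^1 * (c 6)^0 + (-1/96) * (c 1)^0 * (c 2)^3 * (c 3)^0 * (c 4)^0 * (c 5)^0 * (c 6)^1 + (11/2592) * (c 1)^0 * (c 2)^3 * (c 3)^2 * (c 4)^0 * (c 5)^0 * (c 6)^0 + (-11/2304) * (c 1)^0 * (c 2)^4 * (c 3)^0 * (c 4)^1 * (c 5)^0 * (c 6)^0 + (11/4608) * (c 1)^0 * (c 2)^6 * (c 3)^0 * (c 4)^0 * (c 5)^0 * (c 6)^0 +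 (1/48) * (c 1)^1 * (c 2)^0 * (c 3)^1 * (c 4)^2 * (c 5)^0 * (c 6)^0 + (-1/45) * (c 1)^1 * (c 2)^0 * (c 3)^2 * (c 4)^0 * (c 5)^1 * (c 6)^0 + (-1/40) * (c 1)^1 * (c 2)^1 * (c 3)^0 * (c 4)^1 * (c 5)^1 * (c 6)^0 + (1/36) * (c 1)^1 * (c 2)^1 * (c 3)^1 * (c 4)^0 * (c 5)^0 * (c 6)^1 + (1/36) * (c 1)^1 * (c 2)^1 * (c 3)^3 * (c 4)^0 * (c 5)^0 * (c 6)^0 + (-7/120) * (c 1)^1 * (c 2)^2 * (c 3)^1 * (c 4)^1 * (c 5)^0 * (c 6)^0 + (13/400) * (c 1)^1 * (c 2)^3 * (c 3)^0 * (c 4)^0 * (c 5)^1 * (c 6)^0 + (-37/8640) * (c 1)^1 * (c 2)^4 * (c 3)^1 * (c 4)^0 * (c 5)^0 * (c 6)^0 + (1/50) * (c 1)^2 * (c 2)^0 * (c 3)^0 * (c 4)^0 * (c 5)^2 * (c 6)^0 + (-1/48) * (c 1)^2 * (c 2)^0 * (c 3)^0 * (c 4)^1 * (c 5)^0 * (c 6)^1 + (-31/2160) * (c 1)^2 * (c 2)^0 * (c 3)^2 * (c 4)^1 * (c 5)^0 * (c 6)^0 + (11/384) * (c 1)^2 * (c 2)^1 * (c 3)^0 * (c 4)^2 * (c 5)^0 * (c 6)^0 + (1/300) * (c 1)^2 * (c 2)^1 * (c 3)^1 * (c 4)^0 * (c 5)^1 * (c 6)^0 + (-1/48) * (c 1)^2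 * (c 2)^2 * (c 3)^0 * (c 4)^0 * (c 5)^0 * (c 6)^1 + (-13/720) * (c 1)^2 * (c 2)^2 * (c 3)^2 * (c 4)^0 * (c 5)^0 * (c 6)^0 + (107/5760) * (c 1)^2 * (c 2)^3 * (c 3)^0 * (c 4)^1 * (c 5)^0 * (c 6)^0 + (-971/115200) * (c 1)^2 * (c 2)^5 * (c 3)^0 * (c 4)^0 * (c 5)^0 * (c 6)^0 + (-1/72) * (c 1)^3 * (c 2)^0 * (c 3)^0 * (c 4)^1 * (c 5)^1 * (c 6)^0 + (5/324) * (c 1)^3 * (c 2)^0 * (c 3)^1 * (c 4)^0 * (c 5)^0 * (c 6)^1 + (49/4860) * (c 1)^3 * (c 2)^0 * (c 3)^3 * (c 4)^0 * (c 5)^0 * (c 6)^0 + (1/180) * (c 1)^3 * (c 2)^1 * (c 3)^1 * (c 4)^1 * (c 5)^0 * (c 6)^0 + (-13/900) * (c 1)^3 * (c 2)^2 * (c 3)^0 * (c 4)^0 * (c 5)^1 * (c 6)^0 + (4861/194400) * (c 1)^3 * (c 2)^3 * (c 3)^1 * (c 4)^0 * (c 5)^0 * (c 6)^0 + (11/1152) * (c 1)^4 * (c 2)^0 * (c 3)^0 * (c 4)^2 * (c 5)^0 * (c 6)^0 + (-49/2700) * (c 1)^4 * (c 2)^0 * (c 3)^1 * (c 4)^0 * (c 5)^1 * (c 6)^0 + (1/108) * (c 1)^4 * (c 2)^1 * (c 3)^0 * (c 4)^0 * (c 5)^0 * (c 6)^1 + (-767/32400) * (c 1)^4 * (c 2)^1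 * (c 3)^2 * (c 4)^0 * (c 5)^0 * (c 6)^0 + (-1/768) * (c 1)^4 * (c 2)^2 * (c 3)^0 * (c 4)^1 * (c 5)^0 * (c 6)^0 + (-1973/518400) * (c 1)^4 * (c 2)^4 * (c 3)^0 * (c 4)^0 * (c 5)^0 * (c 6)^0 + (11/2025) * (c 1)^5 * (c 2)^0 * (c 3)^1 * (c 4)^1 * (c 5)^0 * (c 6)^0 + (29/4500) * (c 1)^5 * (c 2)^1 * (c 3)^0 * (c 4)^0 * (c 5)^1 * (c 6)^0 + (59/4800) * (c 1)^5 * (c 2)^2 * (c 3)^1 * (c 4)^0 * (c 5)^0 * (c 6)^0 + (-25/7776) * (c 1)^6 * (c 2)^0 * (c 3)^0 * (c 4)^0 * (c 5)^0 * (c 6)^1 + (413/194400) * (c 1)^6 * (c 2)^0 * (c 3)^2 * (c 4)^0 * (c 5)^0 * (c 6)^0 + (-217/14400) * (c 1)^6 * (c 2)^1 * (c 3)^0 * (c 4)^1 * (c 5)^0 * (c 6)^0 + (-230171/46656000) * (c 1)^6 * (c 2)^3 * (c 3)^0 * (c 4)^0 * (c 5)^0 * (c 6)^0 + (581/162000) * (c 1)^7 * (c 2)^0 * (c 3)^0 * (c 4)^0 * (c 5)^1 * (c 6)^0 + (2239/486000) * (c 1)^7 * (c 2)^1 * (c 3)^1 * (c 4)^0 * (c 5)^0 * (c 6)^0 + (71/311040) * (c 1)^8 * (c 2)^0 * (c 3)^0 * (c 4)^1 * (c 5)^0 * (c 6)^0 + (1633/648000) * (c 1)^8 * (c 2)^2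 * (c 3)^0 * (c 4)^0 * (c 5)^0 * (c 6)^0 + (-28469/17496000) * (c 1)^9 * (c 2)^0 * (c 3)^1 * (c 4)^0 * (c 5)^0 * (c 6)^0 + (-136729/233280000) * (c 1)^10 * (c 2)^1 * (c 3)^0 * (c 4)^0 * (c 5)^0 * (c 6)^0 + (337561/2099520000) * (c 1)^12 * (c 2)^0 * (c 3)^0 * (c 4)^0 * (c 5)^0 * (c 6)^0) \<le> 0.428001"
    by (rule final_bound) (use cb c2b in auto)
  ultimately show ?thesis by simp
qed

end
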